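(* Let $K$ be an algebraically closed field, $\mathcal{T}$ a $\operatorname{Hom}$-finite Krull–Schmidt triangulated $K$-category, $\mathcal{I}$ an Auslander–Reiten ideal of $\mathcal{T}$, $\mathcal{R}$ an ideal of $\mathcal{T}$, and $X,Y$ indecomposable objects. (1) If $f\in\mathcal{I}^n\mathcal{R}(X,Y)$ for some $n\ge1$, then there exist $s\ge1$, indecomposable objects $E_1,\dots,E_s$ and morphisms $X\xrightarrow{h_i}E_i\xrightarrow{g_i}Y$ with $h_i\in\mathcal{R}(X,E_i)$ and each $g_i$ a sum of composites of $n$ right $\mathcal{I}$-irreducible morphisms between indecomposable objects, such that $f=\sum_{i=1}^sg_ih_i$. (2) If $f\in\mathcal{R}\mathcal{I}^n(X,Y)$ for some $n\ge1$, then there exist $s\ge1$, indecomposable objects $E_1,\dots,E_s$ and morphisms $X\xrightarrow{h_i}E_i\xrightarrow{g_i}Y$ with $g_i\in\mathcal{R}$ and each $h_i$ a sum of composites of $n$ left $\mathcal{I}$-irreducible morphisms between indecomposable objects, such that $f=\sum_{i=1}^sg_ih_i$.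
   Context: Composition of $b$ then $a$ is $ab$. An ideal: subgroups $\mathcal{I}(X,Y)\subseteq\operatorname{Hom}(X,Y)$ closed under composition. For ideals $\mathcal{A},\mathcal{B}$, $\mathcal{A}\mathcal{B}$ is the ideal of finite sums of composites $ab$, $a\in\mathcal{A}$, $b\in\mathcal{B}$; $\mathcal{I}^n$ is the $n$-fold product. A left (resp. right) $\mathcal{I}$-approximation of $T$ is a morphism in $\mathcal{I}$ starting (resp. ending) at $T$ through which every morphism of $\mathcal{I}$ starting (resp. ending) at $T$ factors. $\mathcal{I}$ is an Auslander–Reiten ideal if every object has left and right $\mathcal{I}$-approximations and every object $X$ admits triangles $X\xrightarrow{f}M\xrightarrow{g}Y\to X[1]$ and $Z\xrightarrow{u}N\xrightarrow{v}X\to Z[1]$ with $f,u$ left and $g,v$ right $\mathcal{I}$-approximations. $h$ is left $\mathcal{I}$-irreducible if $h\in\mathcal{I}$ and whenever $h=h_2h_1$ with $h_1\in\mathcal{I}$, $h_2$ is split epic; right $\mathcal{I}$-irreducible if $h\in\mathcal{I}$ and whenever $h=h_2h_1$ with $h_2\in\mathcal{I}$, $h_1$ is split monic. *)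

theory Defs
  imports "HOL-Computational_Algebra.Polynomial"
begin

text \<open>A K-linear category with a shift and a class of distinguished triangles.
  Composition convention: cmp C a b is "b then a", i.e. the composite ab.\<close>

record ('o, 'm, 'k) tcat =
  ob    :: "'o set"
  hom   :: "'o \<Rightarrow> 'o \<Rightarrow> 'm set"
  cmp   :: "'m \<Rightarrow> 'm \<Rightarrow> 'm"
  idm   :: "'o \<Rightarrow> 'm"
  madd  :: "'m \<Rightarrow> 'm \<Rightarrow> 'm"
  mzero :: "'o \<Rightarrow> 'o \<Rightarrow> 'm"
  mneg  :: "'m \<Rightarrow> 'm"
  msmult :: "'k \<Rightarrow> 'm \<Rightarrow> 'm"
  shO   :: "'o \<Rightarrow> 'o"
  shM   :: "'m \<Rightarrow> 'm"
  dtri  :: "('o \<times> 'o \<times> 'o \<times> 'm \<times> 'm \<times> 'm) set"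

definition msum :: "('o, 'm, 'k) tcat \<Rightarrow> 'o \<Rightarrow> 'o \<Rightarrow> 'm list \<Rightarrow> 'm" where
  "msum C X Y fs = foldr (madd C) fs (mzero C X Y)"

definition k_linear_cat :: "('o, 'm, 'k::field) tcat \<Rightarrow> bool" where
  "k_linear_cat C \<longleftrightarrow>
    (\<forall>X\<in>ob C. \<forall>Y\<in>ob C. \<forall>X'\<in>ob C. \<forall>Y'\<in>ob C.
        hom C X Y \<inter> hom C X' Y' \<noteq> {} \<longrightarrow> X = X' \<and> Y = Y') \<and>
    (\<forall>X\<in>ob C. idm C X \<in> hom C X X) \<and>
    (\<forall>X\<in>ob C. \<forall>Y\<in>ob C. \<forall>Z\<in>ob C. \<forall>f\<in>hom C X Y. \<forall>g\<in>hom C Y Z. cmp C g f \<in> hom C X Z) \<and>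
    (\<forall>W\<in>ob C. \<forall>X\<in>ob C. \<forall>Y\<in>ob C. \<forall>Z\<in>ob C. \<forall>f\<in>hom C W X. \<forall>g\<in>hom C X Y. \<forall>h\<in>hom C Y Z.
        cmp C h (cmp C g f) = cmp C (cmp C h g) f) \<and>
    (\<forall>X\<in>ob C. \<forall>Y\<in>ob C. \<forall>f\<in>hom C X Y. cmp C (idm C Y) f = f \<and> cmp C f (idm C X) = f) \<and>
    (\<forall>X\<in>ob C. \<forall>Y\<in>ob C.
        mzero C X Y \<in> hom C X Y \<and>
        (\<forall>f\<in>hom C X Y. \<forall>g\<in>hom C X Y. madd C f g \<in> hom C X Y) \<and>
        (\<forall>f\<in>hom C X Y. mneg C f \<in> hom C X Y) \<and>
        (\<forall>a. \<forall>f\<in>hom C X Y. msmult C a f \<in> hom C X Y) \<and>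
        (\<forall>f\<in>hom C X Y. \<forall>g\<in>hom C X Y. \<forall>h\<in>hom C X Y.
            madd C (madd C f g) h = madd C f (madd C g h)) \<and>
        (\<forall>f\<in>hom C X Y. \<forall>g\<in>hom C X Y. madd C f g = madd C g f) \<and>
        (\<forall>f\<in>hom C X Y. madd C (mzero C X Y) f = f) \<and>
        (\<forall>f\<in>hom C X Y. madd C (mneg C f) f = mzero C X Y) \<and>
        (\<forall>a. \<forall>f\<in>hom C X Y. \<forall>g\<in>hom C X Y.
            msmult C a (madd C f g) = madd C (msmult C a f) (msmult C a g)) \<and>
        (\<forall>a b. \<forall>f\<in>hom C X Y. msmult C (a + b) f = madd C (msmult C a f) (msmult C b f)) \<and>
        (\<forall>a b. \<forall>f\<in>hom C X Y. msmult C (a * b) f = msmult C a (msmult C b f)) \<and>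
        (\<forall>f\<in>hom C X Y. msmult C 1 f = f)) \<and>
    (\<forall>X\<in>ob C. \<forall>Y\<in>ob C. \<forall>Z\<in>ob C. \<forall>f\<in>hom C X Y. \<forall>f'\<in>hom C X Y. \<forall>g\<in>hom C Y Z. \<forall>g'\<in>hom C Y Z.
        cmp C g (madd C f f') = madd C (cmp C g f) (cmp C g f') \<and>
        cmp C (madd C g g') f = madd C (cmp C g f) (cmp C g' f) \<and>
        (\<forall>a. cmp C g (msmult C a f) = msmult C a (cmp C g f) \<and>
             cmp C (msmult C a g) f = msmult C a (cmp C g f)))"

definition is_iso :: "('o, 'm, 'k) tcat \<Rightarrow> 'o \<Rightarrow> 'o \<Rightarrow> 'm \<Rightarrow> bool" where
  "is_iso C X Y f \<longleftrightarrow> f \<in> hom C X Y \<and>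
     (\<exists>g\<in>hom C Y X. cmp C g f = idm C X \<and> cmp C f g = idm C Y)"

definition is_zero_obj :: "('o, 'm, 'k) tcat \<Rightarrow> 'o \<Rightarrow> bool" where
  "is_zero_obj C Z \<longleftrightarrow> Z \<in> ob C \<and> idm C Z = mzero C Z Z"

definition is_biprod :: "('o, 'm, 'k) tcat \<Rightarrow> 'o \<Rightarrow> 'o \<Rightarrow> 'o \<Rightarrow> 'm \<Rightarrow> 'm \<Rightarrow> 'm \<Rightarrow> 'm \<Rightarrow> bool" where
  "is_biprod C A B P i1 i2 p1 p2 \<longleftrightarrow>
     A \<in> ob C \<and> B \<in> ob C \<and> P \<in> ob C \<and>
     i1 \<in> hom C A P \<and> i2 \<in> hom C B P \<and> p1 \<in> hom C P A \<and> p2 \<in> hom C P B \<and>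
     cmp C p1 i1 = idm C A \<and> cmp C p2 i2 = idm C B \<and>
     cmp C p2 i1 = mzero C A B \<and> cmp C p1 i2 = mzero C B A \<and>
     madd C (cmp C i1 p1) (cmp C i2 p2) = idm C P"

definition additive_k_cat :: "('o, 'm, 'k::field) tcat \<Rightarrow> bool" where
  "additive_k_cat C \<longleftrightarrow> k_linear_cat C \<and> (\<exists>Z. is_zero_obj C Z) \<and>
     (\<forall>A\<in>ob C. \<forall>B\<in>ob C. \<exists>P i1 i2 p1 p2. is_biprod C A B P i1 i2 p1 p2)"

definition hom_finite :: "('o, 'm, 'k::field) tcat \<Rightarrow> bool" where
  "hom_finite C \<longleftrightarrow> (\<forall>X\<in>ob C. \<forall>Y\<in>ob C. \<exists>bs. set bs \<subseteq> hom C X Y \<and>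
     (\<forall>f\<in>hom C X Y. \<exists>cs. length cs = length bs \<and>
        f = msum C X Y (map2 (\<lambda>c b. msmult C c b) cs bs)))"

definition indec :: "('o, 'm, 'k) tcat \<Rightarrow> 'o \<Rightarrow> bool" where
  "indec C X \<longleftrightarrow> X \<in> ob C \<and> \<not> is_zero_obj C X \<and>
     (\<forall>A\<in>ob C. \<forall>B\<in>ob C. \<forall>i1 i2 p1 p2. is_biprod C A B X i1 i2 p1 p2 \<longrightarrow>
        is_zero_obj C A \<or> is_zero_obj C B)"

definition local_end :: "('o, 'm, 'k) tcat \<Rightarrow> 'o \<Rightarrow> bool" where
  "local_end C X \<longleftrightarrow> X \<in> ob C \<and> idm C X \<noteq> mzero C X X \<and>
     (\<forall>f\<in>hom C X X. is_iso C X X f \<or> is_iso C X X (madd C (idm C X) (mneg C f)))"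

definition krull_schmidt :: "('o, 'm, 'k) tcat \<Rightarrow> bool" where
  "krull_schmidt C \<longleftrightarrow> (\<forall>X\<in>ob C. \<exists>(n::nat) Xs \<iota> \<pi>.
     (\<forall>i<n. local_end C (Xs i) \<and> \<iota> i \<in> hom C (Xs i) X \<and> \<pi> i \<in> hom C X (Xs i)) \<and>
     (\<forall>i<n. \<forall>j<n. cmp C (\<pi> i) (\<iota> j) = (if i = j then idm C (Xs i) else mzero C (Xs j) (Xs i))) \<and>
     msum C X X (map (\<lambda>i. cmp C (\<iota> i) (\<pi> i)) [0..<n]) = idm C X)"

definition cand_tri :: "('o, 'm, 'k) tcat \<Rightarrow> 'o \<Rightarrow> 'o \<Rightarrow> 'o \<Rightarrow> 'm \<Rightarrow> 'm \<Rightarrow> 'm \<Rightarrow> bool" where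
  "cand_tri C X Y Z u v w \<longleftrightarrow> X \<in> ob C \<and> Y \<in> ob C \<and> Z \<in> ob C \<and>
     u \<in> hom C X Y \<and> v \<in> hom C Y Z \<and> w \<in> hom C Z (shO C X)"

definition triangulated_cat :: "('o, 'm, 'k::field) tcat \<Rightarrow> bool" where
  "triangulated_cat C \<longleftrightarrow> additive_k_cat C \<and>
   \<comment> \<open>the shift is a K-linear auto-equivalence\<close>
   (\<forall>X\<in>ob C. shO C X \<in> ob C) \<and>
   (\<forall>X\<in>ob C. \<forall>Y\<in>ob C. \<forall>f\<in>hom C X Y. shM C f \<in> hom C (shO C X) (shO C Y)) \<and>
   (\<forall>X\<in>ob C. \<forall>Y\<in>ob C. \<forall>Z\<in>ob C. \<forall>f\<in>hom C X Y. \<forall>g\<in>hom C Y Z.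
       shM C (cmp C g f) = cmp C (shM C g) (shM C f)) \<and>
   (\<forall>X\<in>ob C. shM C (idm C X) = idm C (shO C X)) \<and>
   (\<forall>X\<in>ob C. \<forall>Y\<in>ob C. \<forall>f\<in>hom C X Y. \<forall>g\<in>hom C X Y.
       shM C (madd C f g) = madd C (shM C f) (shM C g) \<and>
       (\<forall>a. shM C (msmult C a f) = msmult C a (shM C f))) \<and>
   (\<forall>X\<in>ob C. \<forall>Y\<in>ob C. bij_betw (shM C) (hom C X Y) (hom C (shO C X) (shO C Y))) \<and>
   (\<forall>Y\<in>ob C. \<exists>X\<in>ob C. \<exists>f. is_iso C (shO C X) Y f) \<and>
   \<comment> \<open>distinguished triangles are triangles\<close>
   (\<forall>X Y Z u v w. (X, Y, Z, u, v, w) \<in> dtri C \<longrightarrow> cand_tri C X Y Z u v w) \<and>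
   \<comment> \<open>TR1: closure under isomorphism of triangles\<close>
   (\<forall>X Y Z u v w X' Y' Z' u' v' w' a b c.
      (X, Y, Z, u, v, w) \<in> dtri C \<and> cand_tri C X' Y' Z' u' v' w' \<and>
      is_iso C X X' a \<and> is_iso C Y Y' b \<and> is_iso C Z Z' c \<and>
      cmp C b u = cmp C u' a \<and> cmp C c v = cmp C v' b \<and> cmp C (shM C a) w = cmp C w' c
      \<longrightarrow> (X', Y', Z', u', v', w') \<in> dtri C) \<and>
   \<comment> \<open>TR1: X -id-> X -> 0 -> X[1] is distinguished\<close>
   (\<forall>X\<in>ob C. \<forall>Z0. is_zero_obj C Z0 \<longrightarrow>
      (X, X, Z0, idm C X, mzero C X Z0, mzero C Z0 (shO C X)) \<in> dtri C) \<and>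
   \<comment> \<open>TR1: every morphism is the base of a distinguished triangle\<close>
   (\<forall>X\<in>ob C. \<forall>Y\<in>ob C. \<forall>u\<in>hom C X Y. \<exists>Z v w. (X, Y, Z, u, v, w) \<in> dtri C) \<and>
   \<comment> \<open>TR2: rotation\<close>
   (\<forall>X Y Z u v w. cand_tri C X Y Z u v w \<longrightarrow>
      ((X, Y, Z, u, v, w) \<in> dtri C \<longleftrightarrow> (Y, Z, shO C X, v, w, mneg C (shM C u)) \<in> dtri C)) \<and>
   \<comment> \<open>TR3: morphism completion\<close>
   (\<forall>X Y Z u v w X' Y' Z' u' v' w' a b.
      (X, Y, Z, u, v, w) \<in> dtri C \<and> (X', Y', Z', u', v', w') \<in> dtri C \<and>
      a \<in> hom C X X' \<and> b \<in> hom C Y Y' \<and> cmp C b u = cmp C u' a \<longrightarrow>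
      (\<exists>c\<in>hom C Z Z'. cmp C c v = cmp C v' b \<and> cmp C (shM C a) w = cmp C w' c)) \<and>
   \<comment> \<open>TR4: octahedral axiom\<close>
   (\<forall>X Y Z u v Z' j k X' l i Y' m n.
      (X, Y, Z', u, j, k) \<in> dtri C \<and> (Y, Z, X', v, l, i) \<in> dtri C \<and>
      (X, Z, Y', cmp C v u, m, n) \<in> dtri C \<longrightarrow>
      (\<exists>f g. (Z', Y', X', f, g, cmp C (shM C j) i) \<in> dtri C \<and>
         cmp C f j = cmp C m v \<and> cmp C n f = k \<and> cmp C g m = l \<and>
         cmp C (shM C u) n = cmp C i g))"

definition is_ideal :: "('o, 'm, 'k) tcat \<Rightarrow> ('o \<Rightarrow> 'o \<Rightarrow> 'm set) \<Rightarrow> bool" where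
  "is_ideal C I \<longleftrightarrow>
     (\<forall>X\<in>ob C. \<forall>Y\<in>ob C. I X Y \<subseteq> hom C X Y \<and> mzero C X Y \<in> I X Y \<and>
        (\<forall>f\<in>I X Y. \<forall>g\<in>I X Y. madd C f g \<in> I X Y) \<and> (\<forall>f\<in>I X Y. mneg C f \<in> I X Y)) \<and>
     (\<forall>W\<in>ob C. \<forall>X\<in>ob C. \<forall>Y\<in>ob C. \<forall>Z\<in>ob C. \<forall>f\<in>I X Y. \<forall>a\<in>hom C W X. \<forall>b\<in>hom C Y Z.
        cmp C b (cmp C f a) \<in> I W Z)"

definition ideal_prod :: "('o, 'm, 'k) tcat \<Rightarrow> ('o \<Rightarrow> 'o \<Rightarrow> 'm set) \<Rightarrow> ('o \<Rightarrow> 'o \<Rightarrow> 'm set)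
    \<Rightarrow> 'o \<Rightarrow> 'o \<Rightarrow> 'm set" where
  "ideal_prod C A B X Y = {f. \<exists>ts :: ('o \<times> 'm \<times> 'm) list.
      (\<forall>(W, a, b) \<in> set ts. W \<in> ob C \<and> a \<in> A W Y \<and> b \<in> B X W) \<and>
      f = msum C X Y (map (\<lambda>(W, a, b). cmp C a b) ts)}"

fun ideal_pow :: "('o, 'm, 'k) tcat \<Rightarrow> ('o \<Rightarrow> 'o \<Rightarrow> 'm set) \<Rightarrow> nat \<Rightarrow> ('o \<Rightarrow> 'o \<Rightarrow> 'm set)" where
  "ideal_pow C I 0 = hom C"
| "ideal_pow C I (Suc 0) = I"
| "ideal_pow C I (Suc (Suc n)) = ideal_prod C I (ideal_pow C I (Suc n))"

definition left_approx :: "('o, 'm, 'k) tcat \<Rightarrow> ('o \<Rightarrow> 'o \<Rightarrow> 'm set) \<Rightarrow> 'o \<Rightarrow> 'o \<Rightarrow> 'm \<Rightarrow> bool" where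
  "left_approx C I T M f \<longleftrightarrow> M \<in> ob C \<and> f \<in> I T M \<and>
     (\<forall>N\<in>ob C. \<forall>g\<in>I T N. \<exists>g'\<in>hom C M N. g = cmp C g' f)"

definition right_approx :: "('o, 'm, 'k) tcat \<Rightarrow> ('o \<Rightarrow> 'o \<Rightarrow> 'm set) \<Rightarrow> 'o \<Rightarrow> 'o \<Rightarrow> 'm \<Rightarrow> bool" where
  "right_approx C I T M f \<longleftrightarrow> M \<in> ob C \<and> f \<in> I M T \<and>
     (\<forall>N\<in>ob C. \<forall>g\<in>I N T. \<exists>g'\<in>hom C N M. g = cmp C f g')"

definition ar_ideal :: "('o, 'm, 'k) tcat \<Rightarrow> ('o \<Rightarrow> 'o \<Rightarrow> 'm set) \<Rightarrow> bool" where
  "ar_ideal C I \<longleftrightarrow> is_ideal C I \<and>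
     (\<forall>T\<in>ob C. (\<exists>M f. left_approx C I T M f) \<and> (\<exists>M f. right_approx C I T M f)) \<and>
     (\<forall>X\<in>ob C.
        (\<exists>M Y f g w. (X, M, Y, f, g, w) \<in> dtri C \<and> left_approx C I X M f \<and> right_approx C I Y M g) \<and>
        (\<exists>Z N u v w. (Z, N, X, u, v, w) \<in> dtri C \<and> left_approx C I Z N u \<and> right_approx C I X N v))"

definition left_irr :: "('o, 'm, 'k) tcat \<Rightarrow> ('o \<Rightarrow> 'o \<Rightarrow> 'm set) \<Rightarrow> 'o \<Rightarrow> 'o \<Rightarrow> 'm \<Rightarrow> bool" where
  "left_irr C I A B h \<longleftrightarrow> h \<in> I A B \<and>
     (\<forall>Z\<in>ob C. \<forall>h1\<in>I A Z. \<forall>h2\<in>hom C Z B. h = cmp C h2 h1 \<longrightarrow>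
        (\<exists>s\<in>hom C B Z. cmp C h2 s = idm C B))"

definition right_irr :: "('o, 'm, 'k) tcat \<Rightarrow> ('o \<Rightarrow> 'o \<Rightarrow> 'm set) \<Rightarrow> 'o \<Rightarrow> 'o \<Rightarrow> 'm \<Rightarrow> bool" where
  "right_irr C I A B h \<longleftrightarrow> h \<in> I A B \<and>
     (\<forall>Z\<in>ob C. \<forall>h1\<in>hom C A Z. \<forall>h2\<in>I Z B. h = cmp C h2 h1 \<longrightarrow>
        (\<exists>r\<in>hom C Z A. cmp C r h1 = idm C A))"

inductive irr_chain :: "('o, 'm, 'k) tcat \<Rightarrow> ('o \<Rightarrow> 'o \<Rightarrow> 'm \<Rightarrow> bool) \<Rightarrow> 'o \<Rightarrow> 'o \<Rightarrow> nat \<Rightarrow> 'm \<Rightarrow> bool"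
  for C P where
  one: "indec C X \<Longrightarrow> indec C Y \<Longrightarrow> P X Y f \<Longrightarrow> irr_chain C P X Y (Suc 0) f"
| step: "irr_chain C P X Y n f \<Longrightarrow> indec C Z \<Longrightarrow> P Y Z g \<Longrightarrow> irr_chain C P X Z (Suc n) (cmp C g f)"

definition sum_of_chains :: "('o, 'm, 'k) tcat \<Rightarrow> ('o \<Rightarrow> 'o \<Rightarrow> 'm \<Rightarrow> bool) \<Rightarrow> nat \<Rightarrow> 'o \<Rightarrow> 'o \<Rightarrow> 'm \<Rightarrow> bool" where
  "sum_of_chains C P n X Y g \<longleftrightarrow>
     (\<exists>fs. (\<forall>f\<in>set fs. irr_chain C P X Y n f) \<and> g = msum C X Y fs)"

end

theory Submission imports Defs begin

definition spanR :: "('o,'m,'k) tcat \<Rightarrow> ('o \<times> 'm) set \<Rightarrow> 'o \<Rightarrow> 'o \<Rightarrow> 'm set" where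
  "spanR C S W Y = {msum C W Y (map (\<lambda>(N,v,c). cmp C v c) ts) | ts.
      \<forall>(N,v,c)\<in>set ts. (N,v)\<in>S \<and> c \<in> hom C W N}"

definition wfS :: "('o,'m,'k) tcat \<Rightarrow> ('o \<times> 'm) set \<Rightarrow> 'o \<Rightarrow> bool" where
  "wfS C S Y \<longleftrightarrow> (\<forall>(N,v)\<in>S. N \<in> ob C \<and> v \<in> hom C N Y)"

definition genR :: "('o,'m,'k) tcat \<Rightarrow> ('o \<Rightarrow> 'o \<Rightarrow> 'm set) \<Rightarrow> ('o \<times> 'm) set \<Rightarrow> 'o \<Rightarrow> bool" where
  "genR C I S Y \<longleftrightarrow> (\<forall>W\<in>ob C. \<forall>g\<in>I W Y. g \<in> spanR C S W Y)"

locale klin = fixes C :: "('o,'m,'k::field) tcat" assumes kl: "k_linear_cat C"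
begin

lemmas KL = kl[unfolded k_linear_cat_def]
lemmas K2 = KL[THEN conjunct2, THEN conjunct1]
lemmas K3 = KL[THEN conjunct2, THEN conjunct2, THEN conjunct1]
lemmas K4 = KL[THEN conjunct2, THEN conjunct2, THEN conjunct2, THEN conjunct1]
lemmas K5 = KL[THEN conjunct2, THEN conjunct2, THEN conjunct2, THEN conjunct2, THEN conjunct1]
lemmas K6a = KL[THEN conjunct2, THEN conjunct2, THEN conjunct2, THEN conjunct2, THEN conjunct2, THEN conjunct1]
lemmas K7a = KL[THEN conjunct2, THEN conjunct2, THEN conjunct2, THEN conjunct2, THEN conjunct2, THEN conjunct2]
lemmas K6 = K6a[THEN bspec, THEN bspec]

lemma idm_hom: "X\<in>ob C \<Longrightarrow> idm C X \<in> hom C X X" by (rule K2[rule_format])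
lemma cmp_hom: "X\<in>ob C \<Longrightarrow> Y\<in>ob C \<Longrightarrow> Z\<in>ob C \<Longrightarrow> f\<in>hom C X Y \<Longrightarrow> g\<in>hom C Y Z \<Longrightarrow> cmp C g f \<in> hom C X Z"
  by (rule K3[rule_format])
lemma assoc: "W\<in>ob C \<Longrightarrow> X\<in>ob C \<Longrightarrow> Y\<in>ob C \<Longrightarrow> Z\<in>ob C \<Longrightarrow> f\<in>hom C W X \<Longrightarrow> g\<in>hom C X Y \<Longrightarrow> h\<in>hom C Y Z
  \<Longrightarrow> cmp C h (cmp C g f) = cmp C (cmp C h g) f"
  by (rule K4[rule_format])
lemma id_l: "X\<in>ob C \<Longrightarrow> Y\<in>ob C \<Longrightarrow> f\<in>hom C X Y \<Longrightarrow> cmp C (idm C Y) f = f"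
  by (rule K5[rule_format, THEN conjunct1])
lemma id_r: "X\<in>ob C \<Longrightarrow> Y\<in>ob C \<Longrightarrow> f\<in>hom C X Y \<Longrightarrow> cmp C f (idm C X) = f"
  by (rule K5[rule_format, THEN conjunct2])
lemma zero_hom: "X\<in>ob C \<Longrightarrow> Y\<in>ob C \<Longrightarrow> mzero C X Y \<in> hom C X Y"
  by (rule K6[THEN conjunct1])
lemma add_hom: "X\<in>ob C \<Longrightarrow> Y\<in>ob C \<Longrightarrow> f\<in>hom C X Y \<Longrightarrow> g\<in>hom C X Y \<Longrightarrow> madd C f g \<in> hom C X Y"
  by (rule K6[THEN conjunct2, THEN conjunct1, rule_format])
lemma neg_hom: "X\<in>ob C \<Longrightarrow> Y\<in>ob C \<Longrightarrow> f\<in>hom C X Y \<Longrightarrow> mneg C f \<in> hom C X Y"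
  by (rule K6[THEN conjunct2, THEN conjunct2, THEN conjunct1, rule_format])
lemma add_assoc: "X\<in>ob C \<Longrightarrow> Y\<in>ob C \<Longrightarrow> f\<in>hom C X Y \<Longrightarrow> g\<in>hom C X Y \<Longrightarrow> h\<in>hom C X Y \<Longrightarrow>
   madd C (madd C f g) h = madd C f (madd C g h)"
  by (rule K6[THEN conjunct2, THEN conjunct2, THEN conjunct2, THEN conjunct2, THEN conjunct1, rule_format])
lemma add_comm: "X\<in>ob C \<Longrightarrow> Y\<in>ob C \<Longrightarrow> f\<in>hom C X Y \<Longrightarrow> g\<in>hom C X Y \<Longrightarrow> madd C f g = madd C g f"
  by (rule K6[THEN conjunct2, THEN conjunct2, THEN conjunct2, THEN conjunct2, THEN conjunct2, THEN conjunct1, rule_format])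
lemma zero_add: "X\<in>ob C \<Longrightarrow> Y\<in>ob C \<Longrightarrow> f\<in>hom C X Y \<Longrightarrow> madd C (mzero C X Y) f = f"
  by (rule K6[THEN conjunct2, THEN conjunct2, THEN conjunct2, THEN conjunct2, THEN conjunct2, THEN conjunct2, THEN conjunct1, rule_format])
lemma neg_add: "X\<in>ob C \<Longrightarrow> Y\<in>ob C \<Longrightarrow> f\<in>hom C X Y \<Longrightarrow> madd C (mneg C f) f = mzero C X Y"
  by (rule K6[THEN conjunct2, THEN conjunct2, THEN conjunct2, THEN conjunct2, THEN conjunct2, THEN conjunct2, THEN conjunct2, THEN conjunct1, rule_format])
lemma cmp_add_r: "X\<in>ob C \<Longrightarrow> Y\<in>ob C \<Longrightarrow> Z\<in>ob C \<Longrightarrow> f\<in>hom C X Y \<Longrightarrow> f'\<in>hom C X Y \<Longrightarrow> g\<in>hom C Y Z \<Longrightarrow>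
   cmp C g (madd C f f') = madd C (cmp C g f) (cmp C g f')"
  by (rule K7a[rule_format, THEN conjunct1])
lemma cmp_add_l: "X\<in>ob C \<Longrightarrow> Y\<in>ob C \<Longrightarrow> Z\<in>ob C \<Longrightarrow> f\<in>hom C X Y \<Longrightarrow> g\<in>hom C Y Z \<Longrightarrow> g'\<in>hom C Y Z \<Longrightarrow>
   cmp C (madd C g g') f = madd C (cmp C g f) (cmp C g' f)"
  by (rule K7a[rule_format, THEN conjunct2, THEN conjunct1])

lemma add_zero: "X\<in>ob C \<Longrightarrow> Y\<in>ob C \<Longrightarrow> f\<in>hom C X Y \<Longrightarrow> madd C f (mzero C X Y) = f"
  using add_comm[of X Y f "mzero C X Y"] zero_add[of X Y f] zero_hom[of X Y] by simp
lemma add_neg: "X\<in>ob C \<Longrightarrow> Y\<in>ob C \<Longrightarrow> f\<in>hom C X Y \<Longrightarrow> madd C f (mneg C f) = mzero C X Y"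
  using add_comm[of X Y f "mneg C f"] neg_add[of X Y f] neg_hom[of X Y f] by simp
lemma add_sub_cancel: "X\<in>ob C \<Longrightarrow> Y\<in>ob C \<Longrightarrow> a\<in>hom C X Y \<Longrightarrow> q\<in>hom C X Y \<Longrightarrow>
   madd C (madd C a q) (mneg C a) = q"
proof -
  assume h: "X\<in>ob C" "Y\<in>ob C" "a\<in>hom C X Y" "q\<in>hom C X Y"
  have na: "mneg C a \<in> hom C X Y" using h neg_hom by blast
  have "madd C (madd C a q) (mneg C a) = madd C (madd C q a) (mneg C a)" using h add_comm[of X Y a q] by simp
  also have "\<dots> = madd C q (madd C a (mneg C a))" using h na add_assoc[of X Y q a "mneg C a"] by simp
  also have "\<dots> = q" using h add_neg[of X Y a] add_zero[of X Y q] by simp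
  finally show ?thesis .
qed
lemma add_cancel: "X\<in>ob C \<Longrightarrow> Y\<in>ob C \<Longrightarrow> a\<in>hom C X Y \<Longrightarrow> b\<in>hom C X Y \<Longrightarrow> c\<in>hom C X Y \<Longrightarrow>
   madd C a b = madd C a c \<Longrightarrow> b = c"
proof -
  assume h: "X\<in>ob C" "Y\<in>ob C" "a\<in>hom C X Y" "b\<in>hom C X Y" "c\<in>hom C X Y" "madd C a b = madd C a c"
  have "b = madd C (madd C a b) (mneg C a)" using add_sub_cancel[of X Y a b] h(1-4) by simp
  also have "\<dots> = madd C (madd C a c) (mneg C a)" using h(6) by simp
  also have "\<dots> = c" using add_sub_cancel[of X Y a c] h(1-3,5) by simp
  finally show ?thesis .
qed
lemma add_left_commute: "X\<in>ob C \<Longrightarrow> Y\<in>ob C \<Longrightarrow> a\<in>hom C X Y \<Longrightarrow> b\<in>hom C X Y \<Longrightarrow> c\<in>hom C X Y \<Longrightarrow>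
   madd C a (madd C b c) = madd C b (madd C a c)"
  using add_assoc[of X Y a b c] add_assoc[of X Y b a c] add_comm[of X Y a b] by simp

lemma cmp_zero_r: "X\<in>ob C \<Longrightarrow> Y\<in>ob C \<Longrightarrow> Z\<in>ob C \<Longrightarrow> g\<in>hom C Y Z \<Longrightarrow> cmp C g (mzero C X Y) = mzero C X Z"
proof -
  assume h: "X\<in>ob C" "Y\<in>ob C" "Z\<in>ob C" "g\<in>hom C Y Z"
  let ?z = "cmp C g (mzero C X Y)"
  have zh: "?z \<in> hom C X Z" using h cmp_hom zero_hom by blast
  have "madd C ?z ?z = cmp C g (madd C (mzero C X Y) (mzero C X Y))"
    using h cmp_add_r[of X Y Z "mzero C X Y" "mzero C X Y" g] zero_hom[of X Y] by simp
  also have "\<dots> = ?z" using zero_add[of X Y "mzero C X Y"] zero_hom[of X Y] h by simp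
  also have "\<dots> = madd C ?z (mzero C X Z)" using h zh add_zero by simp
  finally show ?thesis using add_cancel[of X Z ?z ?z "mzero C X Z"] h zh zero_hom by blast
qed
lemma cmp_zero_l: "X\<in>ob C \<Longrightarrow> Y\<in>ob C \<Longrightarrow> Z\<in>ob C \<Longrightarrow> f\<in>hom C X Y \<Longrightarrow> cmp C (mzero C Y Z) f = mzero C X Z"
proof -
  assume h: "X\<in>ob C" "Y\<in>ob C" "Z\<in>ob C" "f\<in>hom C X Y"
  let ?z = "cmp C (mzero C Y Z) f"
  have zh: "?z \<in> hom C X Z" using h cmp_hom zero_hom by blast
  have "madd C ?z ?z = cmp C (madd C (mzero C Y Z) (mzero C Y Z)) f"
    using h cmp_add_l[of X Y Z f "mzero C Y Z" "mzero C Y Z"] zero_hom[of Y Z] by simp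
  also have "\<dots> = ?z" using zero_add[of Y Z "mzero C Y Z"] zero_hom[of Y Z] h by simp
  also have "\<dots> = madd C ?z (mzero C X Z)" using h zh add_zero by simp
  finally show ?thesis using add_cancel[of X Z ?z ?z "mzero C X Z"] h zh zero_hom by blast
qed
lemma cmp_neg_r: "X\<in>ob C \<Longrightarrow> Y\<in>ob C \<Longrightarrow> Z\<in>ob C \<Longrightarrow> f\<in>hom C X Y \<Longrightarrow> g\<in>hom C Y Z \<Longrightarrow>
   cmp C g (mneg C f) = mneg C (cmp C g f)"
proof -
  assume h: "X\<in>ob C" "Y\<in>ob C" "Z\<in>ob C" "f\<in>hom C X Y" "g\<in>hom C Y Z"
  have gf: "cmp C g f \<in> hom C X Z" "cmp C g (mneg C f) \<in> hom C X Z" using h cmp_hom neg_hom by blast+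
  have "madd C (cmp C g f) (cmp C g (mneg C f)) = cmp C g (madd C f (mneg C f))"
    using h cmp_add_r[of X Y Z f "mneg C f" g] neg_hom[of X Y f] by simp
  also have "\<dots> = mzero C X Z" using h add_neg[of X Y f] cmp_zero_r by simp
  also have "\<dots> = madd C (cmp C g f) (mneg C (cmp C g f))" using add_neg h gf by simp
  finally show ?thesis using add_cancel[of X Z "cmp C g f"] h gf neg_hom by blast
qed

lemma msum_Nil[simp]: "msum C X Y [] = mzero C X Y" by (simp add: msum_def)
lemma msum_Cons[simp]: "msum C X Y (x#xs) = madd C x (msum C X Y xs)" by (simp add: msum_def)

lemma msum_hom: "X\<in>ob C \<Longrightarrow> Y\<in>ob C \<Longrightarrow> \<forall>f\<in>set fs. f \<in> hom C X Y \<Longrightarrow> msum C X Y fs \<in> hom C X Y"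
  by (induction fs) (auto intro: add_hom zero_hom)
lemma msum_append: "X\<in>ob C \<Longrightarrow> Y\<in>ob C \<Longrightarrow> \<forall>f\<in>set xs. f \<in> hom C X Y \<Longrightarrow> \<forall>f\<in>set ys. f \<in> hom C X Y \<Longrightarrow>
  msum C X Y (xs @ ys) = madd C (msum C X Y xs) (msum C X Y ys)"
  by (induction xs) (auto simp: zero_add msum_hom add_assoc)
lemma msum_single: "X\<in>ob C \<Longrightarrow> Y\<in>ob C \<Longrightarrow> f \<in> hom C X Y \<Longrightarrow> msum C X Y [f] = f"
  by (simp add: add_zero)
lemma cmp_msum: "X\<in>ob C \<Longrightarrow> Y\<in>ob C \<Longrightarrow> Z\<in>ob C \<Longrightarrow> g\<in>hom C Y Z \<Longrightarrow> \<forall>f\<in>set fs. f \<in> hom C X Y \<Longrightarrow>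
  cmp C g (msum C X Y fs) = msum C X Z (map (cmp C g) fs)"
  by (induction fs) (auto simp: cmp_zero_r cmp_add_r msum_hom)
lemma msum_cmp: "W\<in>ob C \<Longrightarrow> X\<in>ob C \<Longrightarrow> Y\<in>ob C \<Longrightarrow> h\<in>hom C W X \<Longrightarrow> \<forall>f\<in>set fs. f \<in> hom C X Y \<Longrightarrow>
  cmp C (msum C X Y fs) h = msum C W Y (map (\<lambda>f. cmp C f h) fs)"
  by (induction fs) (auto simp: cmp_zero_l cmp_add_l msum_hom)
lemma msum_filter: "X\<in>ob C \<Longrightarrow> Y\<in>ob C \<Longrightarrow> \<forall>t\<in>set ts. F t \<in> hom C X Y \<Longrightarrow>
  msum C X Y (map F ts) = madd C (msum C X Y (map F (filter P ts))) (msum C X Y (map F (filter (\<lambda>t. \<not> P t) ts)))"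
proof (induction ts)
  case Nil then show ?case by (simp add: zero_add zero_hom)
next
  case (Cons t ts)
  then show ?case by (auto simp: add_assoc msum_hom add_left_commute)
qed


lemma ideal_hom: "is_ideal C I \<Longrightarrow> X\<in>ob C \<Longrightarrow> Y\<in>ob C \<Longrightarrow> f \<in> I X Y \<Longrightarrow> f \<in> hom C X Y"
  unfolding is_ideal_def by blast
lemma ideal_l: "is_ideal C I \<Longrightarrow> X\<in>ob C \<Longrightarrow> Y\<in>ob C \<Longrightarrow> Z\<in>ob C \<Longrightarrow> f \<in> I X Y \<Longrightarrow> b \<in> hom C Y Z \<Longrightarrow> cmp C b f \<in> I X Z"
proof -
  assume h: "is_ideal C I" "X\<in>ob C" "Y\<in>ob C" "Z\<in>ob C" "f \<in> I X Y" "b \<in> hom C Y Z"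
  have "cmp C b (cmp C f (idm C X)) \<in> I X Z" using h idm_hom[of X] unfolding is_ideal_def by blast
  then show ?thesis using id_r[of X Y f] ideal_hom[OF h(1-3,5)] h by simp
qed
lemma ideal_r: "is_ideal C I \<Longrightarrow> W\<in>ob C \<Longrightarrow> X\<in>ob C \<Longrightarrow> Y\<in>ob C \<Longrightarrow> f \<in> I X Y \<Longrightarrow> a \<in> hom C W X \<Longrightarrow> cmp C f a \<in> I W Y"
proof -
  assume h: "is_ideal C I" "W\<in>ob C" "X\<in>ob C" "Y\<in>ob C" "f \<in> I X Y" "a \<in> hom C W X"
  have "cmp C (idm C Y) (cmp C f a) \<in> I W Y" using h idm_hom[of Y] unfolding is_ideal_def by blast
  then show ?thesis using id_l[of W Y "cmp C f a"] cmp_hom[of W X Y a f] ideal_hom[OF h(1,3,4,5)] h by simp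
qed

lemma term_hom: "wfS C S Y \<Longrightarrow> W\<in>ob C \<Longrightarrow> Y\<in>ob C \<Longrightarrow> (N,v)\<in>S \<Longrightarrow> c\<in>hom C W N \<Longrightarrow> cmp C v c \<in> hom C W Y"
  unfolding wfS_def using cmp_hom[of W N Y c v] by blast
lemma terms_hom: "wfS C S Y \<Longrightarrow> W\<in>ob C \<Longrightarrow> Y\<in>ob C \<Longrightarrow> \<forall>(N,v,c)\<in>set ts. (N,v)\<in>S \<and> c \<in> hom C W N \<Longrightarrow>
   \<forall>f\<in>set (map (\<lambda>(N,v,c). cmp C v c) ts). f \<in> hom C W Y"
proof
  fix f assume a: "\<forall>(N,v,c)\<in>set ts. (N,v)\<in>S \<and> c \<in> hom C W N" "wfS C S Y" "W\<in>ob C" "Y\<in>ob C"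
    and "f \<in> set (map (\<lambda>(N,v,c). cmp C v c) ts)"
  then obtain N v c where x: "(N,v,c) \<in> set ts" "f = cmp C v c" by auto
  then have "(N,v)\<in>S" "c \<in> hom C W N" using a(1) by auto
  then show "f \<in> hom C W Y" using term_hom[OF a(2-4)] x by blast
qed

lemma spanR_hom: "W\<in>ob C \<Longrightarrow> Y\<in>ob C \<Longrightarrow> wfS C S Y \<Longrightarrow> g \<in> spanR C S W Y \<Longrightarrow> g \<in> hom C W Y"
proof -
  assume h: "W\<in>ob C" "Y\<in>ob C" "wfS C S Y" "g \<in> spanR C S W Y"
  obtain ts where t: "\<forall>(N,v,c)\<in>set ts. (N,v)\<in>S \<and> c \<in> hom C W N"
     "g = msum C W Y (map (\<lambda>(N,v,c). cmp C v c) ts)" using h(4) unfolding spanR_def by blast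
  show ?thesis using msum_hom[OF h(1,2) terms_hom[OF h(3,1,2) t(1)]] t(2) by simp
qed
lemma spanR_zero: "mzero C W Y \<in> spanR C S W Y"
  unfolding spanR_def by (auto intro!: exI[of _ "[]"])
lemma spanR_add: "W\<in>ob C \<Longrightarrow> Y\<in>ob C \<Longrightarrow> wfS C S Y \<Longrightarrow> g1 \<in> spanR C S W Y \<Longrightarrow> g2 \<in> spanR C S W Y
   \<Longrightarrow> madd C g1 g2 \<in> spanR C S W Y"
proof -
  assume h: "W\<in>ob C" "Y\<in>ob C" "wfS C S Y" "g1 \<in> spanR C S W Y" "g2 \<in> spanR C S W Y"
  obtain ts1 where t1: "\<forall>(N,v,c)\<in>set ts1. (N,v)\<in>S \<and> c \<in> hom C W N"
     "g1 = msum C W Y (map (\<lambda>(N,v,c). cmp C v c) ts1)" using h(4) unfolding spanR_def by blast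
  obtain ts2 where t2: "\<forall>(N,v,c)\<in>set ts2. (N,v)\<in>S \<and> c \<in> hom C W N"
     "g2 = msum C W Y (map (\<lambda>(N,v,c). cmp C v c) ts2)" using h(5) unfolding spanR_def by blast
  have hh: "\<forall>f\<in>set (map (\<lambda>(N,v,c). cmp C v c) ts). f \<in> hom C W Y"
    if "\<forall>(N,v,c)\<in>set ts. (N,v)\<in>S \<and> c \<in> hom C W N" for ts
    using that h(1-3) terms_hom by blast
  have "madd C g1 g2 = msum C W Y (map (\<lambda>(N,v,c). cmp C v c) (ts1 @ ts2))"
    using msum_append[OF h(1,2) hh[OF t1(1)] hh[OF t2(1)]] t1 t2 by simp
  moreover have "\<forall>(N,v,c)\<in>set (ts1@ts2). (N,v)\<in>S \<and> c \<in> hom C W N" using t1 t2 by auto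
  ultimately show ?thesis unfolding spanR_def by blast
qed
lemma spanR_gen: "W\<in>ob C \<Longrightarrow> Y\<in>ob C \<Longrightarrow> wfS C S Y \<Longrightarrow> (N,v) \<in> S \<Longrightarrow> c \<in> hom C W N \<Longrightarrow> cmp C v c \<in> spanR C S W Y"
proof -
  assume h: "W\<in>ob C" "Y\<in>ob C" "wfS C S Y" "(N,v) \<in> S" "c \<in> hom C W N"
  have "cmp C v c \<in> hom C W Y" using h term_hom by blast
  then have "cmp C v c = msum C W Y (map (\<lambda>(N,v,c). cmp C v c) [(N,v,c)])" using msum_single h by simp
  then show ?thesis unfolding spanR_def using h(4,5) by fastforce
qed
lemma spanR_cmp: "W'\<in>ob C \<Longrightarrow> W\<in>ob C \<Longrightarrow> Y\<in>ob C \<Longrightarrow> wfS C S Y \<Longrightarrow> g \<in> spanR C S W Y \<Longrightarrow> d \<in> hom C W' W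
   \<Longrightarrow> cmp C g d \<in> spanR C S W' Y"
proof -
  assume h: "W'\<in>ob C" "W\<in>ob C" "Y\<in>ob C" "wfS C S Y" "g \<in> spanR C S W Y" "d \<in> hom C W' W"
  obtain ts where t: "\<forall>(N,v,c)\<in>set ts. (N,v)\<in>S \<and> c \<in> hom C W N"
     "g = msum C W Y (map (\<lambda>(N,v,c). cmp C v c) ts)" using h(5) unfolding spanR_def by blast
  have hh: "\<forall>f\<in>set (map (\<lambda>(N,v,c). cmp C v c) ts). f \<in> hom C W Y"
    using t h terms_hom by blast
  have "cmp C g d = msum C W' Y (map (\<lambda>f. cmp C f d) (map (\<lambda>(N,v,c). cmp C v c) ts))"
    using msum_cmp[OF h(1,2,3,6) hh] t(2) by simp
  also have "map (\<lambda>f. cmp C f d) (map (\<lambda>(N,v,c). cmp C v c) ts) = map (\<lambda>(N,v,c). cmp C v c) (map (\<lambda>(N,v,c). (N,v,cmp C c d)) ts)"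
  proof -
    have "cmp C (cmp C v c) d = cmp C v (cmp C c d)" if "(N,v,c) \<in> set ts" for N v c
    proof -
      have "(N,v)\<in>S" "c \<in> hom C W N" using that t(1) by auto
      moreover have "N \<in> ob C" "v \<in> hom C N Y" using h(4) calculation(1) unfolding wfS_def by auto
      ultimately show ?thesis using assoc[of W' W N Y d c v] h by simp
    qed
    then show ?thesis by auto
  qed
  finally have eq: "cmp C g d = msum C W' Y (map (\<lambda>(N,v,c). cmp C v c) (map (\<lambda>(N,v,c). (N,v,cmp C c d)) ts))" .
  have "\<forall>(N,v,c)\<in>set (map (\<lambda>(N,v,c). (N,v,cmp C c d)) ts). (N,v)\<in>S \<and> c \<in> hom C W' N"
  proof
    fix x assume "x \<in> set (map (\<lambda>(N,v,c). (N,v,cmp C c d)) ts)"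
    then obtain N v c where x: "x = (N,v,cmp C c d)" "(N,v,c) \<in> set ts" by auto
    then have "(N,v)\<in>S" "c \<in> hom C W N" "N \<in> ob C" using t(1) h(4) unfolding wfS_def by auto
    then show "case x of (N,v,c) \<Rightarrow> (N,v)\<in>S \<and> c \<in> hom C W' N" using x cmp_hom[of W' W N d c] h by simp
  qed
  then show ?thesis unfolding spanR_def using eq by blast
qed

lemma spanR_subst: "W\<in>ob C \<Longrightarrow> Y\<in>ob C \<Longrightarrow> wfS C S Y \<Longrightarrow> wfS C S' Y \<Longrightarrow>
  \<forall>(N,v)\<in>S. v \<in> spanR C S' N Y \<Longrightarrow> g \<in> spanR C S W Y \<Longrightarrow> g \<in> spanR C S' W Y"
proof -
  assume h: "W\<in>ob C" "Y\<in>ob C" "wfS C S Y" "wfS C S' Y" "\<forall>(N,v)\<in>S. v \<in> spanR C S' N Y" "g \<in> spanR C S W Y"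
  have "\<forall>(N,v,c)\<in>set ts. (N,v)\<in>S \<and> c \<in> hom C W N \<Longrightarrow> msum C W Y (map (\<lambda>(N,v,c). cmp C v c) ts) \<in> spanR C S' W Y" for ts
  proof (induction ts)
    case Nil then show ?case using spanR_zero by simp
  next
    case (Cons t ts)
    obtain N v c where tt: "t = (N,v,c)" by (cases t) auto
    have "(N,v)\<in>S" "c \<in> hom C W N" using Cons.prems tt by auto
    moreover have "N \<in> ob C" using h(3) calculation unfolding wfS_def by auto
    ultimately have "cmp C v c \<in> spanR C S' W Y" using spanR_cmp[OF h(1) _ h(2) h(4)] h(5) by blast
    then show ?case using Cons spanR_add[OF h(1,2,4)] tt by auto
  qed
  then show ?thesis using h(6) unfolding spanR_def by blast
qed


lemma remove_nonirr:
  assumes I: "is_ideal C I" and Y: "Y\<in>ob C" and wf: "wfS C S Y" and iS: "(Ni,vi)\<in>S"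
    and le: "local_end C Ni" and vI: "vi \<in> I Ni Y" and gen: "genR C I S Y"
    and nirr: "\<not> right_irr C I Ni Y vi"
  shows "vi \<in> spanR C (S - {(Ni,vi)}) Ni Y"
proof -
  define S' where "S' = S - {(Ni,vi)}"
  have wf': "wfS C S' Y" using wf unfolding wfS_def S'_def by auto
  have Ni: "Ni \<in> ob C" using le unfolding local_end_def by blast
  have vih: "vi \<in> hom C Ni Y" using ideal_hom[OF I Ni Y vI] .
  obtain Z h1 h2 where Z: "Z\<in>ob C" and h1: "h1\<in>hom C Ni Z" and h2: "h2 \<in> I Z Y"
    and veq0: "vi = cmp C h2 h1" and nr: "\<not>(\<exists>r\<in>hom C Z Ni. cmp C r h1 = idm C Ni)"
    using nirr vI unfolding right_irr_def by blast
  have h2h: "h2 \<in> hom C Z Y" using ideal_hom[OF I Z Y h2] .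
  have "h2 \<in> spanR C S Z Y" using gen Z h2 unfolding genR_def by blast
  then obtain ts where t: "\<forall>(N,v,c)\<in>set ts. (N,v)\<in>S \<and> c \<in> hom C Z N"
     and h2eq: "h2 = msum C Z Y (map (\<lambda>(N,v,c). cmp C v c) ts)" unfolding spanR_def by blast
  define F where "F = (\<lambda>(N::'o,v::'m,c::'m). cmp C v c)"
  define P where "P = (\<lambda>(N::'o,v::'m,c::'m). (N,v) = (Ni,vi))"
  define ts1 where "ts1 = filter P ts"
  define ts2 where "ts2 = filter (\<lambda>t. \<not> P t) ts"
  have Fh: "\<forall>t\<in>set ts. F t \<in> hom C Z Y" using terms_hom[OF wf Z Y t] unfolding F_def by auto
  have split: "h2 = madd C (msum C Z Y (map F ts1)) (msum C Z Y (map F ts2))"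
    using msum_filter[OF Z Y Fh, of P] h2eq unfolding ts1_def ts2_def F_def by simp
  define k where "k = msum C Z Ni (map (\<lambda>t. snd (snd t)) ts1)"
  have ts1c: "\<forall>f\<in>set (map (\<lambda>t. snd (snd t)) ts1). f \<in> hom C Z Ni"
  proof
    fix f assume "f \<in> set (map (\<lambda>t. snd (snd t)) ts1)"
    then obtain N v c where x: "(N,v,c) \<in> set ts" "P (N,v,c)" "f = c" unfolding ts1_def by auto
    then show "f \<in> hom C Z Ni" using t unfolding P_def by auto
  qed
  have kh: "k \<in> hom C Z Ni" using msum_hom[OF Z Ni ts1c] unfolding k_def .
  have mapeq: "map F ts1 = map (cmp C vi) (map (\<lambda>t. snd (snd t)) ts1)"
  proof -
    have "F t = cmp C vi (snd (snd t))" if "t \<in> set ts1" for t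
    proof -
      obtain N v c where tt: "t = (N,v,c)" by (cases t) auto
      have "P t" using that unfolding ts1_def by simp
      then show ?thesis using tt unfolding P_def F_def by simp
    qed
    then show ?thesis by simp
  qed
  have s1: "msum C Z Y (map F ts1) = cmp C vi k"
    unfolding k_def mapeq using cmp_msum[OF Z Ni Y vih ts1c] by (rule sym)
  define r2 where "r2 = msum C Z Y (map F ts2)"
  have ts2S: "\<forall>(N,v,c)\<in>set ts2. (N,v)\<in>S' \<and> c \<in> hom C Z N"
    using t unfolding ts2_def P_def S'_def by auto
  have r2s: "r2 \<in> spanR C S' Z Y" unfolding spanR_def r2_def F_def using ts2S by blast
  have r2h: "r2 \<in> hom C Z Y" using spanR_hom[OF Z Y wf' r2s] .
  have vik: "cmp C vi k \<in> hom C Z Y" using cmp_hom[OF Z Ni Y kh vih] .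
  define e where "e = cmp C k h1"
  have eh: "e \<in> hom C Ni Ni" using cmp_hom[OF Ni Z Ni h1 kh] unfolding e_def .
  define q where "q = cmp C r2 h1"
  have qs: "q \<in> spanR C S' Ni Y" using spanR_cmp[OF Ni Z Y wf' r2s h1] unfolding q_def .
  have qh: "q \<in> hom C Ni Y" using cmp_hom[OF Ni Z Y h1 r2h] unfolding q_def .
  define a where "a = cmp C vi e"
  have ah: "a \<in> hom C Ni Y" using cmp_hom[OF Ni Ni Y eh vih] unfolding a_def .
  have veq: "vi = madd C a q"
  proof -
    have "vi = cmp C (madd C (cmp C vi k) r2) h1" using veq0 split s1 unfolding r2_def by simp
    also have "\<dots> = madd C (cmp C (cmp C vi k) h1) q" using cmp_add_l[OF Ni Z Y h1 vik r2h] unfolding q_def .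
    also have "cmp C (cmp C vi k) h1 = a" using assoc[OF Ni Z Ni Y h1 kh vih] unfolding a_def e_def by simp
    finally show ?thesis .
  qed
  have "is_iso C Ni Ni e \<or> is_iso C Ni Ni (madd C (idm C Ni) (mneg C e))"
    using le eh unfolding local_end_def by blast
  then show ?thesis
  proof
    assume "is_iso C Ni Ni e"
    then obtain e' where e': "e' \<in> hom C Ni Ni" "cmp C e' e = idm C Ni" unfolding is_iso_def by blast
    have "cmp C (cmp C e' k) h1 = cmp C e' e" using assoc[OF Ni Z Ni Ni h1 kh e'(1)] unfolding e_def by simp
    moreover have "cmp C e' k \<in> hom C Z Ni" using cmp_hom[OF Z Ni Ni kh e'(1)] .
    ultimately have "cmp C (cmp C e' k) h1 = idm C Ni" "cmp C e' k \<in> hom C Z Ni" using e'(2) by simp_all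
    then show ?thesis using nr by blast
  next
    define u where "u = madd C (idm C Ni) (mneg C e)"
    assume "is_iso C Ni Ni (madd C (idm C Ni) (mneg C e))"
    then obtain d where d: "d \<in> hom C Ni Ni" "cmp C u d = idm C Ni" unfolding is_iso_def u_def by blast
    have uh: "u \<in> hom C Ni Ni" unfolding u_def using add_hom[OF Ni Ni idm_hom[OF Ni] neg_hom[OF Ni Ni eh]] .
    have "cmp C vi u = madd C (cmp C vi (idm C Ni)) (cmp C vi (mneg C e))"
      unfolding u_def using cmp_add_r[OF Ni Ni Y idm_hom[OF Ni] neg_hom[OF Ni Ni eh] vih] .
    also have "\<dots> = madd C vi (mneg C a)" unfolding a_def using id_r[OF Ni Y vih] cmp_neg_r[OF Ni Ni Y eh vih] by simp
    also have "\<dots> = madd C (madd C a q) (mneg C a)" by (simp only: veq[symmetric])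
    also have "\<dots> = q" using add_sub_cancel[OF Ni Y ah qh] .
    finally have vu: "cmp C vi u = q" .
    have "vi = cmp C vi (cmp C u d)" using d(2) id_r[OF Ni Y vih] by simp
    also have "\<dots> = cmp C q d" using assoc[OF Ni Ni Ni Y d(1) uh vih] vu by simp
    finally have "vi = cmp C q d" .
    then show ?thesis using spanR_cmp[OF Ni Ni Y wf' qs d(1)] unfolding S'_def by simp
  qed
qed


lemma genR_min:
  "finite S \<Longrightarrow> is_ideal C I \<Longrightarrow> Y\<in>ob C \<Longrightarrow> wfS C S Y \<Longrightarrow> (\<forall>(N,v)\<in>S. local_end C N \<and> v \<in> I N Y)
   \<Longrightarrow> genR C I S Y \<Longrightarrow> \<exists>S'\<subseteq>S. genR C I S' Y \<and> (\<forall>(N,v)\<in>S'. right_irr C I N Y v)"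
proof (induction "card S" arbitrary: S rule: less_induct)
  case less
  show ?case
  proof (cases "\<forall>(N,v)\<in>S. right_irr C I N Y v")
    case True then show ?thesis using less.prems by blast
  next
    case False
    then obtain Ni vi where iS: "(Ni,vi)\<in>S" and nirr: "\<not> right_irr C I Ni Y vi" by blast
    have le: "local_end C Ni" and vI: "vi\<in>I Ni Y" using less.prems(5) iS by auto
    have vs: "vi \<in> spanR C (S - {(Ni,vi)}) Ni Y"
      using remove_nonirr[OF less.prems(2,3,4) iS le vI less.prems(6) nirr] .
    define S' where "S' = S - {(Ni,vi)}"
    have wf': "wfS C S' Y" using less.prems(4) unfolding wfS_def S'_def by auto
    have allS: "\<forall>(N,v)\<in>S. v \<in> spanR C S' N Y"
    proof
      fix x assume xS: "x\<in>S"
      obtain N v where xx: "x = (N,v)" by (cases x) auto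
      show "case x of (N,v) \<Rightarrow> v \<in> spanR C S' N Y"
      proof (cases "(N,v) = (Ni,vi)")
        case True then show ?thesis using vs xx unfolding S'_def by simp
      next
        case False
        have N: "N\<in>ob C" and vh: "v \<in> hom C N Y" using less.prems(4) xS xx unfolding wfS_def by auto
        have "(N,v)\<in>S'" using False xS xx unfolding S'_def by simp
        then have "cmp C v (idm C N) \<in> spanR C S' N Y" using spanR_gen[OF N less.prems(3) wf' _ idm_hom[OF N]] by blast
        then show ?thesis using id_r[OF N less.prems(3) vh] xx by simp
      qed
    qed
    have gen': "genR C I S' Y" unfolding genR_def
    proof (intro ballI)
      fix W g assume W: "W\<in>ob C" and g: "g \<in> I W Y"
      then have "g \<in> spanR C S W Y" using less.prems(6) unfolding genR_def by blast
      then show "g \<in> spanR C S' W Y" using spanR_subst[OF W less.prems(3,4) wf' allS] by blast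
    qed
    have cd: "card S' < card S" unfolding S'_def using card_Diff1_less[OF less.prems(1) iS] .
    have "finite S'" using less.prems(1) unfolding S'_def by simp
    moreover have "\<forall>(N,v)\<in>S'. local_end C N \<and> v \<in> I N Y" using less.prems(5) unfolding S'_def by auto
    ultimately obtain S'' where "S''\<subseteq>S'" "genR C I S'' Y" "\<forall>(N,v)\<in>S''. right_irr C I N Y v"
      using less.hyps[OF cd _ less.prems(2,3) wf' _ gen'] by blast
    then show ?thesis unfolding S'_def by blast
  qed
qed

lemma genR_exists:
  assumes I: "is_ideal C I" and ks: "krull_schmidt C" and Y: "Y\<in>ob C" and ra: "right_approx C I Y M v"
  shows "\<exists>S. genR C I S Y \<and> (\<forall>(N,v)\<in>S. local_end C N \<and> right_irr C I N Y v)"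
proof -
  have M: "M\<in>ob C" and vI: "v \<in> I M Y" and fac: "\<forall>N\<in>ob C. \<forall>g\<in>I N Y. \<exists>g'\<in>hom C N M. g = cmp C v g'"
    using ra unfolding right_approx_def by auto
  have vh: "v \<in> hom C M Y" using ideal_hom[OF I M Y vI] .
  obtain n Xs \<iota> \<pi> where ks1: "\<forall>i<(n::nat). local_end C (Xs i) \<and> \<iota> i \<in> hom C (Xs i) M \<and> \<pi> i \<in> hom C M (Xs i)"
    and ks3: "msum C M M (map (\<lambda>i. cmp C (\<iota> i) (\<pi> i)) [0..<n]) = idm C M"
    using ks M unfolding krull_schmidt_def by blast
  have Xo: "Xs i \<in> ob C" if "i<n" for i using ks1 that unfolding local_end_def by blast
  define S where "S = (\<lambda>i. (Xs i, cmp C v (\<iota> i))) ` {..<n}"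
  have fin: "finite S" unfolding S_def by simp
  have Sprop: "\<forall>(N,w)\<in>S. local_end C N \<and> w \<in> I N Y"
  proof
    fix x assume "x\<in>S"
    then obtain i where i: "i<n" "x = (Xs i, cmp C v (\<iota> i))" unfolding S_def by auto
    then show "case x of (N,w) \<Rightarrow> local_end C N \<and> w \<in> I N Y"
      using ks1 ideal_r[OF I Xo[OF i(1)] M Y vI] by auto
  qed
  have wf: "wfS C S Y" unfolding wfS_def
  proof
    fix x assume "x\<in>S"
    then obtain i where i: "i<n" "x = (Xs i, cmp C v (\<iota> i))" unfolding S_def by auto
    then show "case x of (N,w) \<Rightarrow> N \<in> ob C \<and> w \<in> hom C N Y"
      using ks1 cmp_hom[OF Xo[OF i(1)] M Y _ vh] Xo by auto
  qed
  have gen: "genR C I S Y" unfolding genR_def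
  proof (intro ballI)
    fix W g assume W: "W\<in>ob C" and g: "g \<in> I W Y"
    obtain g' where g': "g' \<in> hom C W M" "g = cmp C v g'" using fac W g by blast
    define ts where "ts = map (\<lambda>i. (Xs i, cmp C v (\<iota> i), cmp C (\<pi> i) g')) [0..<n]"
    have tsP: "\<forall>(N,w,c)\<in>set ts. (N,w)\<in>S \<and> c \<in> hom C W N"
      unfolding ts_def S_def using ks1 cmp_hom[OF W M _ g'(1)] Xo by auto
    have ih: "\<forall>f\<in>set (map (\<lambda>i. cmp C (\<iota> i) (\<pi> i)) [0..<n]). f \<in> hom C M M"
    proof
      fix f assume "f \<in> set (map (\<lambda>i. cmp C (\<iota> i) (\<pi> i)) [0..<n])"
      then obtain i where i: "i<n" "f = cmp C (\<iota> i) (\<pi> i)" by auto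
      then show "f \<in> hom C M M" using ks1 cmp_hom[OF M Xo[OF i(1)] M] by auto
    qed
    have ih2: "\<forall>f\<in>set (map (\<lambda>f. cmp C f g') (map (\<lambda>i. cmp C (\<iota> i) (\<pi> i)) [0..<n])). f \<in> hom C W M"
      using ih cmp_hom[OF W M M g'(1)] by auto
    have "g = cmp C v (cmp C (idm C M) g')" using g'(2) id_l[OF W M g'(1)] by simp
    also have "\<dots> = cmp C v (msum C W M (map (\<lambda>f. cmp C f g') (map (\<lambda>i. cmp C (\<iota> i) (\<pi> i)) [0..<n])))"
      using msum_cmp[OF W M M g'(1) ih] ks3 by simp
    also have "\<dots> = msum C W Y (map (cmp C v) (map (\<lambda>f. cmp C f g') (map (\<lambda>i. cmp C (\<iota> i) (\<pi> i)) [0..<n])))"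
      using cmp_msum[OF W M Y vh ih2] .
    also have "map (cmp C v) (map (\<lambda>f. cmp C f g') (map (\<lambda>i. cmp C (\<iota> i) (\<pi> i)) [0..<n]))
        = map (\<lambda>(N,v,c). cmp C v c) ts"
    proof -
      have "cmp C v (cmp C (cmp C (\<iota> i) (\<pi> i)) g') = cmp C (cmp C v (\<iota> i)) (cmp C (\<pi> i) g')" if "i<n" for i
      proof -
        have a: "\<iota> i \<in> hom C (Xs i) M" "\<pi> i \<in> hom C M (Xs i)" using ks1 that by auto
        have "cmp C (cmp C (\<iota> i) (\<pi> i)) g' = cmp C (\<iota> i) (cmp C (\<pi> i) g')"
          using assoc[OF W M Xo[OF that] M g'(1) a(2) a(1)] by simp
        moreover have "cmp C v (cmp C (\<iota> i) (cmp C (\<pi> i) g')) = cmp C (cmp C v (\<iota> i)) (cmp C (\<pi> i) g')"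
          using assoc[OF W Xo[OF that] M Y cmp_hom[OF W M Xo[OF that] g'(1) a(2)] a(1) vh] .
        ultimately show ?thesis by simp
      qed
      then show ?thesis unfolding ts_def by simp
    qed
    finally show "g \<in> spanR C S W Y" unfolding spanR_def using tsP by blast
  qed
  obtain S' where "S'\<subseteq>S" "genR C I S' Y" "\<forall>(N,v)\<in>S'. right_irr C I N Y v"
    using genR_min[OF fin I Y wf Sprop gen] by blast
  then show ?thesis using Sprop by blast
qed


lemma kill_summand:
  assumes A: "A\<in>ob C" and B: "B\<in>ob C" and X: "X\<in>ob C" and i: "i\<in>hom C A X" and p: "p\<in>hom C X A"
    and j: "j \<in> hom C B X" and q: "q\<in>hom C X B" and qi: "cmp C q i = mzero C A B" and qj: "cmp C q j = idm C B"
    and iso: "is_iso C X X (cmp C i p)"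
  shows "idm C B = mzero C B B"
proof -
  obtain e' where e': "e' \<in> hom C X X" "cmp C (cmp C i p) e' = idm C X" using iso unfolding is_iso_def by blast
  have ip: "cmp C i p \<in> hom C X X" using cmp_hom[OF X A X p i] .
  have "q = cmp C q (cmp C (cmp C i p) e')" using e'(2) id_r[OF X B q] by simp
  also have "\<dots> = cmp C (cmp C q (cmp C i p)) e'" using assoc[OF X X X B e'(1) ip q] .
  also have "cmp C q (cmp C i p) = cmp C (cmp C q i) p" using assoc[OF X A X B p i q] .
  also have "\<dots> = mzero C X B" using qi cmp_zero_l[OF X A B p] by simp
  also have "cmp C (mzero C X B) e' = mzero C X B" using cmp_zero_l[OF X X B e'(1)] .
  finally have "q = mzero C X B" .
  then show ?thesis using qj cmp_zero_l[OF B X B j] by simp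
qed

lemma local_end_indec: assumes le: "local_end C X" shows "indec C X"
proof -
  have X: "X \<in> ob C" and nz: "idm C X \<noteq> mzero C X X"
    and loc: "\<forall>f\<in>hom C X X. is_iso C X X f \<or> is_iso C X X (madd C (idm C X) (mneg C f))"
    using le unfolding local_end_def by auto
  have "\<not> is_zero_obj C X" using nz unfolding is_zero_obj_def by simp
  moreover have "is_zero_obj C A \<or> is_zero_obj C B"
    if A: "A\<in>ob C" and B: "B\<in>ob C" and bp: "is_biprod C A B X i1 i2 p1 p2" for A B i1 i2 p1 p2
  proof -
    have h: "i1 \<in> hom C A X" "i2 \<in> hom C B X" "p1 \<in> hom C X A" "p2 \<in> hom C X B"
      "cmp C p1 i1 = idm C A" "cmp C p2 i2 = idm C B" "cmp C p2 i1 = mzero C A B" "cmp C p1 i2 = mzero C B A"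
      "madd C (cmp C i1 p1) (cmp C i2 p2) = idm C X" using bp unfolding is_biprod_def by auto
    have eh: "cmp C i1 p1 \<in> hom C X X" using cmp_hom[OF X A X h(3) h(1)] .
    have fh: "cmp C i2 p2 \<in> hom C X X" using cmp_hom[OF X B X h(4) h(2)] .
    have "madd C (idm C X) (mneg C (cmp C i1 p1)) = cmp C i2 p2"
      using h(9)[symmetric] add_sub_cancel[OF X X eh fh] by simp
    then have "is_iso C X X (cmp C i1 p1) \<or> is_iso C X X (cmp C i2 p2)" using loc eh by metis
    then show ?thesis
    proof
      assume "is_iso C X X (cmp C i1 p1)"
      then have "idm C B = mzero C B B" using kill_summand[OF A B X h(1) h(3) h(2) h(4) h(7) h(6)] by blast
      then show ?thesis unfolding is_zero_obj_def using B by simp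
    next
      assume "is_iso C X X (cmp C i2 p2)"
      then have "idm C A = mzero C A A" using kill_summand[OF B A X h(2) h(4) h(1) h(3) h(8) h(5)] by blast
      then show ?thesis unfolding is_zero_obj_def using A by simp
    qed
  qed
  ultimately show ?thesis unfolding indec_def using X by blast
qed

end

definition opc :: "('o,'m,'k) tcat \<Rightarrow> ('o,'m,'k) tcat" where
  "opc C = C\<lparr>hom := (\<lambda>X Y. hom C Y X), cmp := (\<lambda>a b. cmp C b a), mzero := (\<lambda>X Y. mzero C Y X)\<rparr>"

lemma opc_simps[simp]: "ob (opc C) = ob C" "hom (opc C) X Y = hom C Y X" "cmp (opc C) a b = cmp C b a"
  "idm (opc C) = idm C" "madd (opc C) = madd C" "mzero (opc C) X Y = mzero C Y X" "mneg (opc C) = mneg C"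
  "msmult (opc C) = msmult C"
  by (simp_all add: opc_def)

lemma msum_opc[simp]: "msum (opc C) X Y fs = msum C Y X fs"
  by (simp add: msum_def)

definition spanL :: "('o,'m,'k) tcat \<Rightarrow> ('o \<times> 'm) set \<Rightarrow> 'o \<Rightarrow> 'o \<Rightarrow> 'm set" where
  "spanL C S X W = {msum C X W (map (\<lambda>(N,u,c). cmp C c u) ts) | ts.
      \<forall>(N,u,c)\<in>set ts. (N,u)\<in>S \<and> c \<in> hom C N W}"

lemma spanR_opc: "spanR (opc C) S W Y = spanL C S Y W"
  by (simp add: spanR_def spanL_def)

lemma is_iso_opc: "is_iso (opc C) X X f \<longleftrightarrow> is_iso C X X f"
  unfolding is_iso_def by auto

lemma local_end_opc: "local_end (opc C) X \<longleftrightarrow> local_end C X"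
  unfolding local_end_def by (simp add: is_iso_opc)

lemma right_approx_opc: "right_approx (opc C) (\<lambda>X Y. I Y X) T M f \<longleftrightarrow> left_approx C I T M f"
  unfolding right_approx_def left_approx_def by simp

lemma right_irr_opc: "right_irr (opc C) (\<lambda>X Y. I Y X) A B h \<longleftrightarrow> left_irr C I B A h"
  unfolding right_irr_def left_irr_def by auto

lemma genR_opc: "genR (opc C) (\<lambda>X Y. I Y X) S Y \<longleftrightarrow> (\<forall>W\<in>ob C. \<forall>g\<in>I Y W. g \<in> spanL C S Y W)"
  unfolding genR_def by (simp add: spanR_opc)

lemma (in klin) klin_opc: "klin (opc C)"
  unfolding klin_def k_linear_cat_def
proof (intro conjI)
  show "\<forall>X\<in>ob (opc C). \<forall>Y\<in>ob (opc C). \<forall>X'\<in>ob (opc C). \<forall>Y'\<in>ob (opc C).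
        hom (opc C) X Y \<inter> hom (opc C) X' Y' \<noteq> {} \<longrightarrow> X = X' \<and> Y = Y'"
    using KL[THEN conjunct1] by simp
  show "\<forall>X\<in>ob (opc C). idm (opc C) X \<in> hom (opc C) X X" using idm_hom by simp
  show "\<forall>X\<in>ob (opc C). \<forall>Y\<in>ob (opc C). \<forall>Z\<in>ob (opc C). \<forall>f\<in>hom (opc C) X Y. \<forall>g\<in>hom (opc C) Y Z.
        cmp (opc C) g f \<in> hom (opc C) X Z"
    by simp (intro ballI, rule cmp_hom)
  show "\<forall>W\<in>ob (opc C). \<forall>X\<in>ob (opc C). \<forall>Y\<in>ob (opc C). \<forall>Z\<in>ob (opc C). \<forall>f\<in>hom (opc C) W X.
     \<forall>g\<in>hom (opc C) X Y. \<forall>h\<in>hom (opc C) Y Z.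
        cmp (opc C) h (cmp (opc C) g f) = cmp (opc C) (cmp (opc C) h g) f"
    by simp (intro ballI, rule assoc[symmetric])
  show "\<forall>X\<in>ob (opc C). \<forall>Y\<in>ob (opc C). \<forall>f\<in>hom (opc C) X Y.
     cmp (opc C) (idm (opc C) Y) f = f \<and> cmp (opc C) f (idm (opc C) X) = f"
    using id_l id_r by simp
  show "\<forall>X\<in>ob (opc C). \<forall>Y\<in>ob (opc C).
        mzero (opc C) X Y \<in> hom (opc C) X Y \<and>
        (\<forall>f\<in>hom (opc C) X Y. \<forall>g\<in>hom (opc C) X Y. madd (opc C) f g \<in> hom (opc C) X Y) \<and>
        (\<forall>f\<in>hom (opc C) X Y. mneg (opc C) f \<in> hom (opc C) X Y) \<and>
        (\<forall>a. \<forall>f\<in>hom (opc C) X Y. msmult (opc C) a f \<in> hom (opc C) X Y) \<and>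
        (\<forall>f\<in>hom (opc C) X Y. \<forall>g\<in>hom (opc C) X Y. \<forall>h\<in>hom (opc C) X Y.
            madd (opc C) (madd (opc C) f g) h = madd (opc C) f (madd (opc C) g h)) \<and>
        (\<forall>f\<in>hom (opc C) X Y. \<forall>g\<in>hom (opc C) X Y. madd (opc C) f g = madd (opc C) g f) \<and>
        (\<forall>f\<in>hom (opc C) X Y. madd (opc C) (mzero (opc C) X Y) f = f) \<and>
        (\<forall>f\<in>hom (opc C) X Y. madd (opc C) (mneg (opc C) f) f = mzero (opc C) X Y) \<and>
        (\<forall>a. \<forall>f\<in>hom (opc C) X Y. \<forall>g\<in>hom (opc C) X Y.
            msmult (opc C) a (madd (opc C) f g) = madd (opc C) (msmult (opc C) a f) (msmult (opc C) a g)) \<and>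
        (\<forall>a b. \<forall>f\<in>hom (opc C) X Y. msmult (opc C) (a + b) f = madd (opc C) (msmult (opc C) a f) (msmult (opc C) b f)) \<and>
        (\<forall>a b. \<forall>f\<in>hom (opc C) X Y. msmult (opc C) (a * b) f = msmult (opc C) a (msmult (opc C) b f)) \<and>
        (\<forall>f\<in>hom (opc C) X Y. msmult (opc C) 1 f = f)"
  proof (intro ballI)
    fix X Y assume "X \<in> ob (opc C)" "Y \<in> ob (opc C)"
    then have YX: "Y \<in> ob C" "X \<in> ob C" by simp_all
    show "mzero (opc C) X Y \<in> hom (opc C) X Y \<and>
        (\<forall>f\<in>hom (opc C) X Y. \<forall>g\<in>hom (opc C) X Y. madd (opc C) f g \<in> hom (opc C) X Y) \<and>
        (\<forall>f\<in>hom (opc C) X Y. mneg (opc C) f \<in> hom (opc C) X Y) \<and>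
        (\<forall>a. \<forall>f\<in>hom (opc C) X Y. msmult (opc C) a f \<in> hom (opc C) X Y) \<and>
        (\<forall>f\<in>hom (opc C) X Y. \<forall>g\<in>hom (opc C) X Y. \<forall>h\<in>hom (opc C) X Y.
            madd (opc C) (madd (opc C) f g) h = madd (opc C) f (madd (opc C) g h)) \<and>
        (\<forall>f\<in>hom (opc C) X Y. \<forall>g\<in>hom (opc C) X Y. madd (opc C) f g = madd (opc C) g f) \<and>
        (\<forall>f\<in>hom (opc C) X Y. madd (opc C) (mzero (opc C) X Y) f = f) \<and>
        (\<forall>f\<in>hom (opc C) X Y. madd (opc C) (mneg (opc C) f) f = mzero (opc C) X Y) \<and>
        (\<forall>a. \<forall>f\<in>hom (opc C) X Y. \<forall>g\<in>hom (opc C) X Y.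
            msmult (opc C) a (madd (opc C) f g) = madd (opc C) (msmult (opc C) a f) (msmult (opc C) a g)) \<and>
        (\<forall>a b. \<forall>f\<in>hom (opc C) X Y. msmult (opc C) (a + b) f = madd (opc C) (msmult (opc C) a f) (msmult (opc C) b f)) \<and>
        (\<forall>a b. \<forall>f\<in>hom (opc C) X Y. msmult (opc C) (a * b) f = msmult (opc C) a (msmult (opc C) b f)) \<and>
        (\<forall>f\<in>hom (opc C) X Y. msmult (opc C) 1 f = f)" unfolding opc_simps by (rule K6[OF YX])
  qed
  show "\<forall>X\<in>ob (opc C). \<forall>Y\<in>ob (opc C). \<forall>Z\<in>ob (opc C). \<forall>f\<in>hom (opc C) X Y. \<forall>f'\<in>hom (opc C) X Y.
     \<forall>g\<in>hom (opc C) Y Z. \<forall>g'\<in>hom (opc C) Y Z.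
        cmp (opc C) g (madd (opc C) f f') = madd (opc C) (cmp (opc C) g f) (cmp (opc C) g f') \<and>
        cmp (opc C) (madd (opc C) g g') f = madd (opc C) (cmp (opc C) g f) (cmp (opc C) g' f) \<and>
        (\<forall>a. cmp (opc C) g (msmult (opc C) a f) = msmult (opc C) a (cmp (opc C) g f) \<and>
             cmp (opc C) (msmult (opc C) a g) f = msmult (opc C) a (cmp (opc C) g f))"
  proof (intro ballI)
    fix X Y Z f f' g g' assume a: "X \<in> ob (opc C)" "Y \<in> ob (opc C)" "Z \<in> ob (opc C)"
      "f\<in>hom (opc C) X Y" "f'\<in>hom (opc C) X Y" "g\<in>hom (opc C) Y Z" "g'\<in>hom (opc C) Y Z"
    then have "Z \<in> ob C" "Y \<in> ob C" "X \<in> ob C" "g\<in>hom C Z Y" "g'\<in>hom C Z Y" "f\<in>hom C Y X" "f'\<in>hom C Y X" by simp_all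
    note K7a[rule_format, OF this]
    then show "cmp (opc C) g (madd (opc C) f f') = madd (opc C) (cmp (opc C) g f) (cmp (opc C) g f') \<and>
        cmp (opc C) (madd (opc C) g g') f = madd (opc C) (cmp (opc C) g f) (cmp (opc C) g' f) \<and>
        (\<forall>a. cmp (opc C) g (msmult (opc C) a f) = msmult (opc C) a (cmp (opc C) g f) \<and>
             cmp (opc C) (msmult (opc C) a g) f = msmult (opc C) a (cmp (opc C) g f))" by simp
  qed
qed

lemma ks_opc: "krull_schmidt C \<Longrightarrow> krull_schmidt (opc C)"
  unfolding krull_schmidt_def
proof (intro ballI)
  fix X assume ks: "\<forall>X\<in>ob C. \<exists>(n::nat) Xs \<iota> \<pi>.
     (\<forall>i<n. local_end C (Xs i) \<and> \<iota> i \<in> hom C (Xs i) X \<and> \<pi> i \<in> hom C X (Xs i)) \<and>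
     (\<forall>i<n. \<forall>j<n. cmp C (\<pi> i) (\<iota> j) = (if i = j then idm C (Xs i) else mzero C (Xs j) (Xs i))) \<and>
     msum C X X (map (\<lambda>i. cmp C (\<iota> i) (\<pi> i)) [0..<n]) = idm C X" and X: "X \<in> ob (opc C)"
  then obtain n Xs \<iota> \<pi> where a: "\<forall>i<(n::nat). local_end C (Xs i) \<and> \<iota> i \<in> hom C (Xs i) X \<and> \<pi> i \<in> hom C X (Xs i)"
     "\<forall>i<n. \<forall>j<n. cmp C (\<pi> i) (\<iota> j) = (if i = j then idm C (Xs i) else mzero C (Xs j) (Xs i))"
     "msum C X X (map (\<lambda>i. cmp C (\<iota> i) (\<pi> i)) [0..<n]) = idm C X" by auto
  show "\<exists>(n::nat) Xs \<iota> \<pi>.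
     (\<forall>i<n. local_end (opc C) (Xs i) \<and> \<iota> i \<in> hom (opc C) (Xs i) X \<and> \<pi> i \<in> hom (opc C) X (Xs i)) \<and>
     (\<forall>i<n. \<forall>j<n. cmp (opc C) (\<pi> i) (\<iota> j) = (if i = j then idm (opc C) (Xs i) else mzero (opc C) (Xs j) (Xs i))) \<and>
     msum (opc C) X X (map (\<lambda>i. cmp (opc C) (\<iota> i) (\<pi> i)) [0..<n]) = idm (opc C) X"
    apply (rule exI[of _ n], rule exI[of _ Xs], rule exI[of _ \<pi>], rule exI[of _ \<iota>])
    using a by (auto simp: local_end_opc)
qed

lemma is_ideal_opc: "k_linear_cat C \<Longrightarrow> is_ideal C I \<Longrightarrow> is_ideal (opc C) (\<lambda>X Y. I Y X)"
proof -
  assume kl: "k_linear_cat C" and I: "is_ideal C I"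
  interpret klin C using kl by (simp add: klin_def)
  show ?thesis unfolding is_ideal_def
  proof (rule conjI)
    show "\<forall>X\<in>ob (opc C). \<forall>Y\<in>ob (opc C). (\<lambda>X Y. I Y X) X Y \<subseteq> hom (opc C) X Y \<and> mzero (opc C) X Y \<in> (\<lambda>X Y. I Y X) X Y \<and>
        (\<forall>f\<in>(\<lambda>X Y. I Y X) X Y. \<forall>g\<in>(\<lambda>X Y. I Y X) X Y. madd (opc C) f g \<in> (\<lambda>X Y. I Y X) X Y) \<and>
        (\<forall>f\<in>(\<lambda>X Y. I Y X) X Y. mneg (opc C) f \<in> (\<lambda>X Y. I Y X) X Y)"
      using I unfolding is_ideal_def by simp
  next
    show "\<forall>W\<in>ob (opc C). \<forall>X\<in>ob (opc C). \<forall>Y\<in>ob (opc C). \<forall>Z\<in>ob (opc C). \<forall>f\<in>(\<lambda>X Y. I Y X) X Y.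
       \<forall>a\<in>hom (opc C) W X. \<forall>b\<in>hom (opc C) Y Z. cmp (opc C) b (cmp (opc C) f a) \<in> (\<lambda>X Y. I Y X) W Z"
    proof (intro ballI)
    fix W X Y Z f a b assume h: "W \<in> ob (opc C)" "X \<in> ob (opc C)" "Y \<in> ob (opc C)" "Z \<in> ob (opc C)"
      "f \<in> (\<lambda>X Y. I Y X) X Y" "a \<in> hom (opc C) W X" "b \<in> hom (opc C) Y Z"
    then have h': "W \<in> ob C" "X \<in> ob C" "Y \<in> ob C" "Z \<in> ob C" "a \<in> hom C X W" "b \<in> hom C Z Y" "f \<in> I Y X" by simp_all
    have fh: "f \<in> hom C Y X" using ideal_hom[OF I h'(3,2) h'(7)] .
    have "cmp C a (cmp C f b) \<in> I Z W" using I h' unfolding is_ideal_def by blast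
    moreover have "cmp C a (cmp C f b) = cmp C (cmp C a f) b" using assoc[OF h'(4,3,2,1) h'(6) fh h'(5)] .
    ultimately show "cmp (opc C) b (cmp (opc C) f a) \<in> (\<lambda>X Y. I Y X) W Z" by simp
    qed
  qed
qed

lemma genL_exists:
  assumes kl: "k_linear_cat C" and I: "is_ideal C I" and ks: "krull_schmidt C" and X: "X\<in>ob C"
    and la: "left_approx C I X M u"
  shows "\<exists>S. (\<forall>W\<in>ob C. \<forall>g\<in>I X W. g \<in> spanL C S X W) \<and> (\<forall>(N,u)\<in>S. local_end C N \<and> left_irr C I X N u)"
proof -
  interpret klin C using kl by (simp add: klin_def)
  interpret O: klin "opc C" using klin_opc .
  obtain S where "genR (opc C) (\<lambda>X Y. I Y X) S X" "\<forall>(N,v)\<in>S. local_end (opc C) N \<and> right_irr (opc C) (\<lambda>X Y. I Y X) N X v"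
    using O.genR_exists[OF is_ideal_opc[OF kl I] ks_opc[OF ks], of X M u] X la
    by (simp add: right_approx_opc) blast
  then show ?thesis by (auto simp: genR_opc local_end_opc right_irr_opc)
qed


lemma irr_chain_props: "irr_chain C P X Y n f \<Longrightarrow> indec C X \<and> indec C Y"
  by (induction rule: irr_chain.induct) auto

context klin begin

lemma indec_ob: "indec C X \<Longrightarrow> X \<in> ob C" unfolding indec_def by blast

lemma irr_chain_hom: "irr_chain C P X Y n f \<Longrightarrow> (\<forall>A B h. indec C A \<longrightarrow> indec C B \<longrightarrow> P A B h \<longrightarrow> h \<in> hom C A B) \<Longrightarrow> f \<in> hom C X Y"
proof (induction rule: irr_chain.induct)
  case (one X Y f) then show ?case by blast
next
  case (step X Y n f Z g)
  have "Y \<in> ob C" "X \<in> ob C" using irr_chain_props[OF step.hyps(1)] indec_ob by auto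
  then show ?case using step cmp_hom[of X Y Z f g] indec_ob[OF step.hyps(2)] irr_chain_props[OF step.hyps(1)] by blast
qed

lemma sum_collect:
  assumes X: "X\<in>ob C" and Y: "Y\<in>ob C"
    and each: "\<forall>x\<in>set xs. \<exists>es. (\<forall>e\<in>set es. Q e) \<and> t x = msum C X Y (map F es)"
    and Fh: "\<forall>e. Q e \<longrightarrow> F e \<in> hom C X Y"
  shows "\<exists>es. (\<forall>e\<in>set es. Q e) \<and> msum C X Y (map t xs) = msum C X Y (map F es)"
  using each
proof (induction xs)
  case Nil then show ?case by (intro exI[of _ "[]"]) simp
next
  case (Cons x xs)
  obtain es1 where e1: "\<forall>e\<in>set es1. Q e" "t x = msum C X Y (map F es1)" using Cons.prems by auto
  obtain es2 where e2: "\<forall>e\<in>set es2. Q e" "msum C X Y (map t xs) = msum C X Y (map F es2)" using Cons by auto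
  have h1: "\<forall>f\<in>set (map F es1). f \<in> hom C X Y" using e1(1) Fh by auto
  have h2: "\<forall>f\<in>set (map F es2). f \<in> hom C X Y" using e2(1) Fh by auto
  have "msum C X Y (map t (x#xs)) = msum C X Y (map F (es1 @ es2))"
    using msum_append[OF X Y h1 h2] e1(2) e2(2) by simp
  then show ?case using e1(1) e2(1) by (intro exI[of _ "es1 @ es2"]) auto
qed

lemma mem_ideal_prod: "f \<in> ideal_prod C A B X Y \<longleftrightarrow> (\<exists>ts. (\<forall>(W, a, b) \<in> set ts. W \<in> ob C \<and> a \<in> A W Y \<and> b \<in> B X W) \<and>
      f = msum C X Y (map (\<lambda>(W, a, b). cmp C a b) ts))"
  unfolding ideal_prod_def by simp

lemma ideal_pow_SS: "ideal_pow C I (Suc (Suc k)) = ideal_prod C I (ideal_pow C I (Suc k))" by simp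

lemma ideal_pow_hom_aux: "is_ideal C I \<Longrightarrow> \<forall>X Y f. X\<in>ob C \<longrightarrow> Y\<in>ob C \<longrightarrow> f \<in> ideal_pow C I n X Y \<longrightarrow> f \<in> hom C X Y"
proof (induction n)
  case 0 then show ?case by simp
next
  case (Suc n)
  show ?case
  proof (cases n)
    case 0 then show ?thesis using ideal_hom[OF Suc.prems] by simp
  next
    case (Suc k)
    show ?thesis
    proof (intro allI impI)
      fix X Y f assume X: "X\<in>ob C" and Y: "Y\<in>ob C" and f: "f \<in> ideal_pow C I (Suc n) X Y"
      have "f \<in> ideal_prod C I (ideal_pow C I n) X Y" using f Suc by simp
      then obtain ts where t: "\<forall>(W,a,b)\<in>set ts. W\<in>ob C \<and> a \<in> I W Y \<and> b \<in> ideal_pow C I n X W"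
        and feq: "f = msum C X Y (map (\<lambda>(W,a,b). cmp C a b) ts)"
        unfolding mem_ideal_prod by blast
      have "\<forall>g\<in>set (map (\<lambda>(W,a,b). cmp C a b) ts). g \<in> hom C X Y"
      proof
        fix g assume "g \<in> set (map (\<lambda>(W,a,b). cmp C a b) ts)"
        then obtain W a b where w: "(W,a,b)\<in>set ts" "g = cmp C a b" by auto
        then have W: "W\<in>ob C" and a: "a \<in> I W Y" and b: "b \<in> ideal_pow C I n X W" using t by auto
        have "b \<in> hom C X W" using Suc.IH[OF Suc.prems] X W b by blast
        then show "g \<in> hom C X Y" using cmp_hom[OF X W Y _ ideal_hom[OF Suc.prems W Y a]] w(2) by blast
      qed
      then show "f \<in> hom C X Y" using msum_hom[OF X Y] feq by blast
    qed
  qed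
qed

lemma ideal_pow_hom: "is_ideal C I \<Longrightarrow> X\<in>ob C \<Longrightarrow> Y\<in>ob C \<Longrightarrow> f \<in> ideal_pow C I n X Y \<Longrightarrow> f \<in> hom C X Y"
  using ideal_pow_hom_aux by blast

lemma ideal_pow_left:
  assumes I: "is_ideal C I" and W: "W\<in>ob C" and V: "V\<in>ob C" and N: "N\<in>ob C"
    and a: "a \<in> ideal_pow C I (Suc n) W V" and c: "c \<in> hom C V N"
  shows "cmp C c a \<in> ideal_pow C I (Suc n) W N"
proof (cases n)
  case 0 then show ?thesis using ideal_l[OF I W V N] a c by simp
next
  case (Suc k)
  have "a \<in> ideal_prod C I (ideal_pow C I (Suc k)) W V" using a Suc by simp
  then obtain ts where t: "\<forall>(U,a',b)\<in>set ts. U\<in>ob C \<and> a' \<in> I U V \<and> b \<in> ideal_pow C I (Suc k) W U"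
    and aeq: "a = msum C W V (map (\<lambda>(U,a',b). cmp C a' b) ts)"
    unfolding mem_ideal_prod by blast
  have th: "\<forall>g\<in>set (map (\<lambda>(U,a',b). cmp C a' b) ts). g \<in> hom C W V"
  proof
    fix g assume "g \<in> set (map (\<lambda>(U,a',b). cmp C a' b) ts)"
    then obtain U a' b where w: "(U,a',b)\<in>set ts" "g = cmp C a' b" by auto
    then have U: "U\<in>ob C" and a': "a' \<in> I U V" and b: "b \<in> ideal_pow C I (Suc k) W U" using t by auto
    have "b \<in> hom C W U" using ideal_pow_hom[OF I W U b] .
    then show "g \<in> hom C W V" using cmp_hom[OF W U V _ ideal_hom[OF I U V a']] w(2) by blast
  qed
  define ts' where "ts' = map (\<lambda>(U,a',b). (U, cmp C c a', b)) ts"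
  have "cmp C c a = msum C W N (map (cmp C c) (map (\<lambda>(U,a',b). cmp C a' b) ts))"
    using cmp_msum[OF W V N c th] aeq by simp
  also have "map (cmp C c) (map (\<lambda>(U,a',b). cmp C a' b) ts) = map (\<lambda>(U,a',b). cmp C a' b) ts'"
  proof -
    have "cmp C c (cmp C a' b) = cmp C (cmp C c a') b" if "(U,a',b)\<in>set ts" for U a' b
    proof -
      have U: "U\<in>ob C" and a': "a' \<in> I U V" and b: "b \<in> ideal_pow C I (Suc k) W U" using t that by auto
      show ?thesis using assoc[OF W U V N ideal_pow_hom[OF I W U b] ideal_hom[OF I U V a'] c] .
    qed
    then show ?thesis unfolding ts'_def by auto
  qed
  finally have eq: "cmp C c a = msum C W N (map (\<lambda>(U,a',b). cmp C a' b) ts')" .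
  have "\<forall>(U,a',b)\<in>set ts'. U\<in>ob C \<and> a' \<in> I U N \<and> b \<in> ideal_pow C I (Suc k) W U"
    unfolding ts'_def using t ideal_l[OF I _ V N _ c] by auto
  then have "cmp C c a \<in> ideal_prod C I (ideal_pow C I (Suc k)) W N" unfolding mem_ideal_prod using eq by blast
  then show ?thesis using Suc by simp
qed


lemma rirr_hom: "is_ideal C I \<Longrightarrow> \<forall>A B h. indec C A \<longrightarrow> indec C B \<longrightarrow> right_irr C I A B h \<longrightarrow> h \<in> hom C A B"
  unfolding right_irr_def using ideal_hom indec_ob by blast
lemma lirr_hom: "is_ideal C I \<Longrightarrow> \<forall>A B h. indec C A \<longrightarrow> indec C B \<longrightarrow> left_irr C I A B h \<longrightarrow> h \<in> hom C A B"
  unfolding left_irr_def using ideal_hom indec_ob by blast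

lemma chainR:
  assumes I: "is_ideal C I" and ks: "krull_schmidt C" and ar: "\<forall>T\<in>ob C. \<exists>M f. right_approx C I T M f"
  shows "indec C Y \<Longrightarrow> W\<in>ob C \<Longrightarrow> a \<in> ideal_pow C I (Suc m) W Y \<Longrightarrow>
    \<exists>es. (\<forall>(E,g,h)\<in>set es. irr_chain C (right_irr C I) E Y (Suc m) g \<and> h \<in> hom C W E) \<and>
       a = msum C W Y (map (\<lambda>(E,g,h). cmp C g h) es)"
proof (induction m arbitrary: Y W a)
  case 0
  have Y: "Y \<in> ob C" using indec_ob[OF 0(1)] .
  obtain M v where "right_approx C I Y M v" using ar Y by blast
  then obtain S where gS: "genR C I S Y" and Sp: "\<forall>(N,v)\<in>S. local_end C N \<and> right_irr C I N Y v"
    using genR_exists[OF I ks Y] by blast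
  have "a \<in> I W Y" using 0(3) by simp
  then have "a \<in> spanR C S W Y" using gS 0(2) unfolding genR_def by blast
  then obtain ts where t: "\<forall>(N,v,c)\<in>set ts. (N,v)\<in>S \<and> c \<in> hom C W N"
     and aeq: "a = msum C W Y (map (\<lambda>(N,v,c). cmp C v c) ts)" unfolding spanR_def by blast
  have "\<forall>(E,g,h)\<in>set ts. irr_chain C (right_irr C I) E Y (Suc 0) g \<and> h \<in> hom C W E"
  proof
    fix x assume x: "x \<in> set ts"
    obtain N v c where xx: "x = (N,v,c)" by (cases x) auto
    have "(N,v)\<in>S" "c \<in> hom C W N" using t x xx by auto
    then have "indec C N" "right_irr C I N Y v" "c \<in> hom C W N" using Sp local_end_indec by auto
    then show "case x of (E,g,h) \<Rightarrow> irr_chain C (right_irr C I) E Y (Suc 0) g \<and> h \<in> hom C W E"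
      using irr_chain.one[of C N Y "right_irr C I" v] 0(1) xx by simp
  qed
  then show ?case using aeq by blast
next
  case (Suc m)
  have Y: "Y \<in> ob C" using indec_ob[OF Suc.prems(1)] .
  have W: "W \<in> ob C" using Suc.prems(2) .
  obtain M v where "right_approx C I Y M v" using ar Y by blast
  then obtain S where gS: "genR C I S Y" and Sp: "\<forall>(N,v)\<in>S. local_end C N \<and> right_irr C I N Y v"
    using genR_exists[OF I ks Y] by blast
  have wf: "wfS C S Y" unfolding wfS_def
  proof
    fix x assume "x \<in> S"
    moreover obtain N v where "x = (N,v)" by (cases x) auto
    ultimately show "case x of (N,v) \<Rightarrow> N \<in> ob C \<and> v \<in> hom C N Y"
      using Sp local_end_indec indec_ob rirr_hom[OF I] Suc.prems(1) by fastforce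
  qed
  define Q where "Q = (\<lambda>(E,g,h). irr_chain C (right_irr C I) E Y (Suc (Suc m)) g \<and> h \<in> hom C W E)"
  define F where "F = (\<lambda>(E::'o,g::'m,h::'m). cmp C g h)"
  have Fh: "\<forall>e. Q e \<longrightarrow> F e \<in> hom C W Y"
  proof (intro allI impI)
    fix e assume q: "Q e"
    obtain E g h where ee: "e = (E,g,h)" by (cases e) auto
    have ch: "irr_chain C (right_irr C I) E Y (Suc (Suc m)) g" and h: "h \<in> hom C W E" using q ee unfolding Q_def by auto
    have "g \<in> hom C E Y" using irr_chain_hom[OF ch rirr_hom[OF I]] .
    moreover have "E \<in> ob C" using irr_chain_props[OF ch] indec_ob by blast
    ultimately show "F e \<in> hom C W Y" using cmp_hom[OF W _ Y h] ee unfolding F_def by simp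
  qed
  have "a \<in> ideal_prod C I (ideal_pow C I (Suc m)) W Y" using Suc.prems(3) by simp
  then obtain ts where t: "\<forall>(V,a',b)\<in>set ts. V\<in>ob C \<and> a' \<in> I V Y \<and> b \<in> ideal_pow C I (Suc m) W V"
    and aeq: "a = msum C W Y (map (\<lambda>(V,a',b). cmp C a' b) ts)"
    unfolding mem_ideal_prod by blast
  have each: "\<forall>x\<in>set ts. \<exists>es. (\<forall>e\<in>set es. Q e) \<and> (\<lambda>(V,a',b). cmp C a' b) x = msum C W Y (map F es)"
  proof
    fix x assume x: "x \<in> set ts"
    obtain V a' b where xx: "x = (V,a',b)" by (cases x) auto
    have V: "V\<in>ob C" and a': "a' \<in> I V Y" and b: "b \<in> ideal_pow C I (Suc m) W V" using t x xx by auto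
    have bh: "b \<in> hom C W V" using ideal_pow_hom[OF I W V b] .
    have "a' \<in> spanR C S V Y" using gS V a' unfolding genR_def by blast
    then obtain us where u: "\<forall>(N,v,c)\<in>set us. (N,v)\<in>S \<and> c \<in> hom C V N"
       and a'eq: "a' = msum C V Y (map (\<lambda>(N,v,c). cmp C v c) us)" unfolding spanR_def by blast
    have uh: "\<forall>f\<in>set (map (\<lambda>(N,v,c). cmp C v c) us). f \<in> hom C V Y" using terms_hom[OF wf V Y u] .
    have "cmp C a' b = msum C W Y (map (\<lambda>f. cmp C f b) (map (\<lambda>(N,v,c). cmp C v c) us))"
      using msum_cmp[OF W V Y bh uh] a'eq by simp
    also have "\<dots> = msum C W Y (map (\<lambda>u. cmp C ((\<lambda>(N,v,c). cmp C v c) u) b) us)" by (simp add: o_def)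
    finally have eq1: "cmp C a' b = msum C W Y (map (\<lambda>u. cmp C ((\<lambda>(N,v,c). cmp C v c) u) b) us)" .
    have each2: "\<forall>u\<in>set us. \<exists>es. (\<forall>e\<in>set es. Q e) \<and> (\<lambda>u. cmp C ((\<lambda>(N,v,c). cmp C v c) u) b) u = msum C W Y (map F es)"
    proof
      fix u assume uu: "u \<in> set us"
      obtain N v c where ux: "u = (N,v,c)" by (cases u) auto
      have NS: "(N,v)\<in>S" and c: "c \<in> hom C V N" using u uu ux by auto
      have iN: "indec C N" and ri: "right_irr C I N Y v" using Sp NS local_end_indec by auto
      have N: "N \<in> ob C" using indec_ob[OF iN] .
      have vh: "v \<in> hom C N Y" using rirr_hom[OF I] iN Suc.prems(1) ri by blast
      have cb: "cmp C c b \<in> ideal_pow C I (Suc m) W N" using ideal_pow_left[OF I W V N b c] .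
      obtain es' where e': "\<forall>(E,g,h)\<in>set es'. irr_chain C (right_irr C I) E N (Suc m) g \<and> h \<in> hom C W E"
        and cbeq: "cmp C c b = msum C W N (map (\<lambda>(E,g,h). cmp C g h) es')"
        using Suc.IH[OF iN W cb] by blast
      have e'h: "\<forall>f\<in>set (map (\<lambda>(E,g,h). cmp C g h) es'). f \<in> hom C W N"
      proof
        fix f assume "f \<in> set (map (\<lambda>(E,g,h). cmp C g h) es')"
        then obtain E g h where w: "(E,g,h) \<in> set es'" "f = cmp C g h" by auto
        then have ch: "irr_chain C (right_irr C I) E N (Suc m) g" and h: "h \<in> hom C W E" using e' by auto
        have "g \<in> hom C E N" using irr_chain_hom[OF ch rirr_hom[OF I]] .
        moreover have "E \<in> ob C" using irr_chain_props[OF ch] indec_ob by blast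
        ultimately show "f \<in> hom C W N" using cmp_hom[OF W _ N h] w by simp
      qed
      define es where "es = map (\<lambda>(E,g,h). (E, cmp C v g, h)) es'"
      have "cmp C (cmp C v c) b = cmp C v (cmp C c b)" using assoc[OF W V N Y bh c vh] by simp
      also have "\<dots> = msum C W Y (map (cmp C v) (map (\<lambda>(E,g,h). cmp C g h) es'))"
        using cmp_msum[OF W N Y vh e'h] cbeq by simp
      also have "map (cmp C v) (map (\<lambda>(E,g,h). cmp C g h) es') = map F es"
      proof -
        have "cmp C v (cmp C g h) = cmp C (cmp C v g) h" if "(E,g,h) \<in> set es'" for E g h
        proof -
          have ch: "irr_chain C (right_irr C I) E N (Suc m) g" and h: "h \<in> hom C W E" using e' that by auto
          have "g \<in> hom C E N" using irr_chain_hom[OF ch rirr_hom[OF I]] .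
          moreover have "E \<in> ob C" using irr_chain_props[OF ch] indec_ob by blast
          ultimately show ?thesis using assoc[OF W _ N Y h _ vh] by simp
        qed
        then show ?thesis unfolding es_def F_def by auto
      qed
      finally have eq: "cmp C (cmp C v c) b = msum C W Y (map F es)" .
      have "\<forall>e\<in>set es. Q e"
      proof
        fix e assume "e \<in> set es"
        then obtain E g h where w: "(E,g,h) \<in> set es'" "e = (E, cmp C v g, h)" unfolding es_def by auto
        then have ch: "irr_chain C (right_irr C I) E N (Suc m) g" and h: "h \<in> hom C W E" using e' by auto
        have "irr_chain C (right_irr C I) E Y (Suc (Suc m)) (cmp C v g)"
          using irr_chain.step[OF ch Suc.prems(1) ri] .
        then show "Q e" using w h unfolding Q_def by simp
      qed
      then show "\<exists>es. (\<forall>e\<in>set es. Q e) \<and> (\<lambda>u. cmp C ((\<lambda>(N,v,c). cmp C v c) u) b) u = msum C W Y (map F es)"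
        using eq ux by auto
    qed
    obtain es where "\<forall>e\<in>set es. Q e" "msum C W Y (map (\<lambda>u. cmp C ((\<lambda>(N,v,c). cmp C v c) u) b) us) = msum C W Y (map F es)"
      using sum_collect[OF W Y each2 Fh] by blast
    then show "\<exists>es. (\<forall>e\<in>set es. Q e) \<and> (\<lambda>(V,a',b). cmp C a' b) x = msum C W Y (map F es)"
      using eq1 xx by auto
  qed
  obtain es where "\<forall>e\<in>set es. Q e" "msum C W Y (map (\<lambda>(V,a',b). cmp C a' b) ts) = msum C W Y (map F es)"
    using sum_collect[OF W Y each Fh] by blast
  then show ?case using aeq unfolding Q_def F_def by auto
qed


lemma chainL:
  assumes I: "is_ideal C I" and ks: "krull_schmidt C" and al: "\<forall>T\<in>ob C. \<exists>M f. left_approx C I T M f"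
    and iX: "indec C X"
  shows "W\<in>ob C \<Longrightarrow> b \<in> ideal_pow C I (Suc m) X W \<Longrightarrow>
    \<exists>es. (\<forall>(E,g,h)\<in>set es. irr_chain C (left_irr C I) X E (Suc m) h \<and> g \<in> hom C E W) \<and>
       b = msum C X W (map (\<lambda>(E,g,h). cmp C g h) es)"
proof (induction m arbitrary: W b)
  case 0
  have X: "X \<in> ob C" using indec_ob[OF iX] .
  obtain M u where "left_approx C I X M u" using al X by blast
  then obtain S where gS: "\<forall>W\<in>ob C. \<forall>g\<in>I X W. g \<in> spanL C S X W" and Sp: "\<forall>(N,u)\<in>S. local_end C N \<and> left_irr C I X N u"
    using genL_exists[OF kl I ks X] by blast
  have "b \<in> I X W" using 0(2) by simp
  then have "b \<in> spanL C S X W" using gS 0(1) by blast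
  then obtain ts where t: "\<forall>(N,u,c)\<in>set ts. (N,u)\<in>S \<and> c \<in> hom C N W"
     and beq: "b = msum C X W (map (\<lambda>(N,u,c). cmp C c u) ts)" unfolding spanL_def by blast
  define es where "es = map (\<lambda>(N,u,c). (N,c,u)) ts"
  have "\<forall>(E,g,h)\<in>set es. irr_chain C (left_irr C I) X E (Suc 0) h \<and> g \<in> hom C E W"
  proof
    fix x assume x: "x \<in> set es"
    then obtain N u c where xx: "x = (N,c,u)" "(N,u,c) \<in> set ts" unfolding es_def by auto
    have "(N,u)\<in>S" "c \<in> hom C N W" using t xx by auto
    then have "indec C N" "left_irr C I X N u" "c \<in> hom C N W" using Sp local_end_indec by auto
    then show "case x of (E,g,h) \<Rightarrow> irr_chain C (left_irr C I) X E (Suc 0) h \<and> g \<in> hom C E W"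
      using irr_chain.one[of C X N "left_irr C I" u] iX xx by simp
  qed
  moreover have "b = msum C X W (map (\<lambda>(E,g,h). cmp C g h) es)"
  proof -
    have "map (\<lambda>(E,g,h). cmp C g h) es = map (\<lambda>(N,u,c). cmp C c u) ts" unfolding es_def by auto
    then show ?thesis using beq by simp
  qed
  ultimately show ?case by blast
next
  case (Suc m)
  have X: "X \<in> ob C" using indec_ob[OF iX] .
  have W: "W \<in> ob C" using Suc.prems(1) .
  define Q where "Q = (\<lambda>(E,g,h). irr_chain C (left_irr C I) X E (Suc (Suc m)) h \<and> g \<in> hom C E W)"
  define F where "F = (\<lambda>(E::'o,g::'m,h::'m). cmp C g h)"
  have Fh: "\<forall>e. Q e \<longrightarrow> F e \<in> hom C X W"
  proof (intro allI impI)
    fix e assume q: "Q e"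
    obtain E g h where ee: "e = (E,g,h)" by (cases e) auto
    have ch: "irr_chain C (left_irr C I) X E (Suc (Suc m)) h" and g: "g \<in> hom C E W" using q ee unfolding Q_def by auto
    have "h \<in> hom C X E" using irr_chain_hom[OF ch lirr_hom[OF I]] .
    moreover have "E \<in> ob C" using irr_chain_props[OF ch] indec_ob by blast
    ultimately show "F e \<in> hom C X W" using cmp_hom[OF X _ W _ g] ee unfolding F_def by simp
  qed
  have "b \<in> ideal_prod C I (ideal_pow C I (Suc m)) X W" using Suc.prems(2) by simp
  then obtain ts where t: "\<forall>(V,a',b)\<in>set ts. V\<in>ob C \<and> a' \<in> I V W \<and> b \<in> ideal_pow C I (Suc m) X V"
    and beq: "b = msum C X W (map (\<lambda>(V,a',b). cmp C a' b) ts)"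
    unfolding mem_ideal_prod by blast
  have each: "\<forall>x\<in>set ts. \<exists>es. (\<forall>e\<in>set es. Q e) \<and> (\<lambda>(V,a',b). cmp C a' b) x = msum C X W (map F es)"
  proof
    fix x assume x: "x \<in> set ts"
    obtain V a' b' where xx: "x = (V,a',b')" by (cases x) auto
    have V: "V\<in>ob C" and a': "a' \<in> I V W" and b': "b' \<in> ideal_pow C I (Suc m) X V" using t x xx by auto
    have a'h: "a' \<in> hom C V W" using ideal_hom[OF I V W a'] .
    obtain es' where e': "\<forall>(E,g,h)\<in>set es'. irr_chain C (left_irr C I) X E (Suc m) h \<and> g \<in> hom C E V"
        and b'eq: "b' = msum C X V (map (\<lambda>(E,g,h). cmp C g h) es')"
        using Suc.IH[OF V b'] by blast
    have e'h: "\<forall>f\<in>set (map (\<lambda>(E,g,h). cmp C g h) es'). f \<in> hom C X V"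
    proof
      fix f assume "f \<in> set (map (\<lambda>(E,g,h). cmp C g h) es')"
      then obtain E g h where w: "(E,g,h) \<in> set es'" "f = cmp C g h" by auto
      then have ch: "irr_chain C (left_irr C I) X E (Suc m) h" and g: "g \<in> hom C E V" using e' by auto
      have "h \<in> hom C X E" using irr_chain_hom[OF ch lirr_hom[OF I]] .
      moreover have "E \<in> ob C" using irr_chain_props[OF ch] indec_ob by blast
      ultimately show "f \<in> hom C X V" using cmp_hom[OF X _ V _ g] w by simp
    qed
    have "cmp C a' b' = msum C X W (map (cmp C a') (map (\<lambda>(E,g,h). cmp C g h) es'))"
      using cmp_msum[OF X V W a'h e'h] b'eq by simp
    also have "\<dots> = msum C X W (map (\<lambda>e. cmp C a' ((\<lambda>(E,g,h). cmp C g h) e)) es')" by (simp add: o_def)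
    finally have eq1: "cmp C a' b' = msum C X W (map (\<lambda>e. cmp C a' ((\<lambda>(E,g,h). cmp C g h) e)) es')" .
    have each2: "\<forall>e\<in>set es'. \<exists>es. (\<forall>e\<in>set es. Q e) \<and> (\<lambda>e. cmp C a' ((\<lambda>(E,g,h). cmp C g h) e)) e = msum C X W (map F es)"
    proof
      fix e assume ee: "e \<in> set es'"
      obtain E g h where ex: "e = (E,g,h)" by (cases e) auto
      have ch: "irr_chain C (left_irr C I) X E (Suc m) h" and g: "g \<in> hom C E V" using e' ee ex by auto
      have iE: "indec C E" using irr_chain_props[OF ch] by blast
      have E: "E \<in> ob C" using indec_ob[OF iE] .
      have hh: "h \<in> hom C X E" using irr_chain_hom[OF ch lirr_hom[OF I]] .
      have ag: "cmp C a' g \<in> I E W" using ideal_r[OF I E V W a' g] .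
      obtain M u where "left_approx C I E M u" using al E by blast
      then obtain S where gS: "\<forall>W\<in>ob C. \<forall>g\<in>I E W. g \<in> spanL C S E W" and Sp: "\<forall>(N,u)\<in>S. local_end C N \<and> left_irr C I E N u"
        using genL_exists[OF kl I ks E] by blast
      have "cmp C a' g \<in> spanL C S E W" using gS W ag by blast
      then obtain us where u: "\<forall>(N,u,c)\<in>set us. (N,u)\<in>S \<and> c \<in> hom C N W"
         and ageq: "cmp C a' g = msum C E W (map (\<lambda>(N,u,c). cmp C c u) us)" unfolding spanL_def by blast
      have uprops: "indec C N \<and> left_irr C I E N u \<and> c \<in> hom C N W \<and> u \<in> hom C E N \<and> N \<in> ob C" if "(N,u,c) \<in> set us" for N u c
      proof -
        have "(N,u)\<in>S" "c \<in> hom C N W" using u that by auto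
        then have "indec C N" "left_irr C I E N u" "c \<in> hom C N W" using Sp local_end_indec by auto
        moreover have "u \<in> hom C E N" using lirr_hom[OF I] iE calculation by blast
        ultimately show ?thesis using indec_ob by blast
      qed
      have uh: "\<forall>f\<in>set (map (\<lambda>(N,u,c). cmp C c u) us). f \<in> hom C E W"
      proof
        fix f assume "f \<in> set (map (\<lambda>(N,u,c). cmp C c u) us)"
        then obtain N u c where w: "(N,u,c) \<in> set us" "f = cmp C c u" by auto
        then show "f \<in> hom C E W" using uprops[OF w(1)] cmp_hom[OF E _ W] by blast
      qed
      define es where "es = map (\<lambda>(N,u,c). (N, c, cmp C u h)) us"
      have "cmp C a' (cmp C g h) = cmp C (cmp C a' g) h" using assoc[OF X E V W hh g a'h] .
      also have "\<dots> = msum C X W (map (\<lambda>f. cmp C f h) (map (\<lambda>(N,u,c). cmp C c u) us))"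
        using msum_cmp[OF X E W hh uh] ageq by simp
      also have "map (\<lambda>f. cmp C f h) (map (\<lambda>(N,u,c). cmp C c u) us) = map F es"
      proof -
        have "cmp C (cmp C c u) h = cmp C c (cmp C u h)" if "(N,u,c) \<in> set us" for N u c
          using uprops[OF that] assoc[OF X E _ W hh] by metis
        then show ?thesis unfolding es_def F_def by auto
      qed
      finally have eq: "cmp C a' (cmp C g h) = msum C X W (map F es)" .
      have "\<forall>e\<in>set es. Q e"
      proof
        fix e assume "e \<in> set es"
        then obtain N u c where w: "(N,u,c) \<in> set us" "e = (N, c, cmp C u h)" unfolding es_def by auto
        have "irr_chain C (left_irr C I) X N (Suc (Suc m)) (cmp C u h)"
          using irr_chain.step[OF ch] uprops[OF w(1)] by blast
        then show "Q e" using w uprops[OF w(1)] unfolding Q_def by simp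
      qed
      then show "\<exists>es. (\<forall>e\<in>set es. Q e) \<and> (\<lambda>e. cmp C a' ((\<lambda>(E,g,h). cmp C g h) e)) e = msum C X W (map F es)"
        using eq ex by auto
    qed
    obtain es where "\<forall>e\<in>set es. Q e" "msum C X W (map (\<lambda>e. cmp C a' ((\<lambda>(E,g,h). cmp C g h) e)) es') = msum C X W (map F es)"
      using sum_collect[OF X W each2 Fh] by blast
    then show "\<exists>es. (\<forall>e\<in>set es. Q e) \<and> (\<lambda>(V,a',b). cmp C a' b) x = msum C X W (map F es)"
      using eq1 xx by auto
  qed
  obtain es where "\<forall>e\<in>set es. Q e" "msum C X W (map (\<lambda>(V,a',b). cmp C a' b) ts) = msum C X W (map F es)"
    using sum_collect[OF X W each Fh] by blast
  then show ?case using beq unfolding Q_def F_def by auto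
qed

end

theorem proposition4p11:
  fixes C :: "('o, 'm, 'k::field) tcat"
    and I R :: "'o \<Rightarrow> 'o \<Rightarrow> 'm set"
    and X Y :: 'o
  assumes "\<forall>p :: 'k poly. 0 < degree p \<longrightarrow> (\<exists>x. poly p x = 0)"
    and "triangulated_cat C"
    and "hom_finite C"
    and "krull_schmidt C"
    and "ar_ideal C I"
    and "is_ideal C R"
    and "indec C X"
    and "indec C Y"
  shows "(\<forall>n\<ge>1. \<forall>f\<in>ideal_prod C (ideal_pow C I n) R X Y.
            \<exists>es :: ('o \<times> 'm \<times> 'm) list. es \<noteq> [] \<and>
              (\<forall>(E, g, h)\<in>set es. indec C E \<and> h \<in> R X E \<and> sum_of_chains C (right_irr C I) n E Y g) \<and>
              f = msum C X Y (map (\<lambda>(E, g, h). cmp C g h) es))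
       \<and> (\<forall>n\<ge>1. \<forall>f\<in>ideal_prod C R (ideal_pow C I n) X Y.
            \<exists>es :: ('o \<times> 'm \<times> 'm) list. es \<noteq> [] \<and>
              (\<forall>(E, g, h)\<in>set es. indec C E \<and> g \<in> R E Y \<and> sum_of_chains C (left_irr C I) n X E h) \<and>
              f = msum C X Y (map (\<lambda>(E, g, h). cmp C g h) es))"
proof -
  have kl: "k_linear_cat C"
    using assms(2)[unfolded triangulated_cat_def, THEN conjunct1, unfolded additive_k_cat_def, THEN conjunct1] .
  interpret klin C using kl by (simp add: klin_def)
  have I: "is_ideal C I" using assms(5)[unfolded ar_ideal_def, THEN conjunct1] .
  have apx: "\<forall>T\<in>ob C. (\<exists>M f. left_approx C I T M f) \<and> (\<exists>M f. right_approx C I T M f)"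
    using assms(5)[unfolded ar_ideal_def, THEN conjunct2, THEN conjunct1] .
  have al: "\<forall>T\<in>ob C. \<exists>M f. left_approx C I T M f" using apx by blast
  have ar: "\<forall>T\<in>ob C. \<exists>M f. right_approx C I T M f" using apx by blast
  have R: "is_ideal C R" using assms(6) .
  have ks: "krull_schmidt C" using assms(4) .
  have iX: "indec C X" and iY: "indec C Y" using assms(7,8) .
  have X: "X \<in> ob C" and Y: "Y \<in> ob C" using indec_ob iX iY by auto
  have part1: "\<exists>es :: ('o \<times> 'm \<times> 'm) list. es \<noteq> [] \<and>
              (\<forall>(E, g, h)\<in>set es. indec C E \<and> h \<in> R X E \<and> sum_of_chains C (right_irr C I) n E Y g) \<and>
              f = msum C X Y (map (\<lambda>(E, g, h). cmp C g h) es)"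
    if n1: "n \<ge> 1" and f: "f \<in> ideal_prod C (ideal_pow C I n) R X Y" for n f
  proof -
    obtain m where nm: "n = Suc m" using n1 by (cases n) auto
    obtain ts where t: "\<forall>(W,a,b)\<in>set ts. W\<in>ob C \<and> a \<in> ideal_pow C I (Suc m) W Y \<and> b \<in> R X W"
      and feq: "f = msum C X Y (map (\<lambda>(W,a,b). cmp C a b) ts)"
      using f nm unfolding mem_ideal_prod by blast
    define Q where "Q = (\<lambda>(E,g,h). indec C E \<and> h \<in> R X E \<and> irr_chain C (right_irr C I) E Y (Suc m) g)"
    define F where "F = (\<lambda>(E::'o,g::'m,h::'m). cmp C g h)"
    have Fh: "\<forall>e. Q e \<longrightarrow> F e \<in> hom C X Y"
    proof (intro allI impI)
      fix e assume q: "Q e"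
      obtain E g h where ee: "e = (E,g,h)" by (cases e) auto
      have iE: "indec C E" and hR: "h \<in> R X E" and ch: "irr_chain C (right_irr C I) E Y (Suc m) g"
        using q ee unfolding Q_def by auto
      have E: "E \<in> ob C" using indec_ob[OF iE] .
      have "g \<in> hom C E Y" using irr_chain_hom[OF ch rirr_hom[OF I]] .
      then show "F e \<in> hom C X Y" using cmp_hom[OF X E Y ideal_hom[OF R X E hR]] ee unfolding F_def by simp
    qed
    have each: "\<forall>x\<in>set ts. \<exists>es. (\<forall>e\<in>set es. Q e) \<and> (\<lambda>(W,a,b). cmp C a b) x = msum C X Y (map F es)"
    proof
      fix x assume x: "x \<in> set ts"
      obtain W a b where xx: "x = (W,a,b)" by (cases x) auto
      have W: "W\<in>ob C" and a: "a \<in> ideal_pow C I (Suc m) W Y" and b: "b \<in> R X W" using t x xx by auto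
      have bh: "b \<in> hom C X W" using ideal_hom[OF R X W b] .
      obtain es' where e': "\<forall>(E,g,h)\<in>set es'. irr_chain C (right_irr C I) E Y (Suc m) g \<and> h \<in> hom C W E"
        and aeq: "a = msum C W Y (map (\<lambda>(E,g,h). cmp C g h) es')"
        using chainR[OF I ks ar iY W a] by blast
      have eprops: "indec C E \<and> E \<in> ob C \<and> g \<in> hom C E Y \<and> h \<in> hom C W E \<and> irr_chain C (right_irr C I) E Y (Suc m) g"
        if "(E,g,h) \<in> set es'" for E g h
      proof -
        have ch: "irr_chain C (right_irr C I) E Y (Suc m) g" and h: "h \<in> hom C W E" using e' that by auto
        have "g \<in> hom C E Y" using irr_chain_hom[OF ch rirr_hom[OF I]] .
        moreover have "indec C E" using irr_chain_props[OF ch] by blast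
        ultimately show ?thesis using indec_ob ch h by blast
      qed
      have e'h: "\<forall>f\<in>set (map (\<lambda>(E,g,h). cmp C g h) es'). f \<in> hom C W Y"
      proof
        fix f assume "f \<in> set (map (\<lambda>(E,g,h). cmp C g h) es')"
        then obtain E g h where w: "(E,g,h) \<in> set es'" "f = cmp C g h" by auto
        then show "f \<in> hom C W Y" using eprops[OF w(1)] cmp_hom[OF W _ Y] by blast
      qed
      define es where "es = map (\<lambda>(E,g,h). (E, g, cmp C h b)) es'"
      have "cmp C a b = msum C X Y (map (\<lambda>f. cmp C f b) (map (\<lambda>(E,g,h). cmp C g h) es'))"
        using msum_cmp[OF X W Y bh e'h] aeq by simp
      also have "map (\<lambda>f. cmp C f b) (map (\<lambda>(E,g,h). cmp C g h) es') = map F es"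
      proof -
        have "cmp C (cmp C g h) b = cmp C g (cmp C h b)" if "(E,g,h) \<in> set es'" for E g h
          using eprops[OF that] assoc[OF X W _ Y bh] by metis
        then show ?thesis unfolding es_def F_def by auto
      qed
      finally have eq: "cmp C a b = msum C X Y (map F es)" .
      have "\<forall>e\<in>set es. Q e"
      proof
        fix e assume "e \<in> set es"
        then obtain E g h where w: "(E,g,h) \<in> set es'" "e = (E, g, cmp C h b)" unfolding es_def by auto
        have "cmp C h b \<in> R X E" using eprops[OF w(1)] ideal_l[OF R X W _ b] by blast
        then show "Q e" using w eprops[OF w(1)] unfolding Q_def by simp
      qed
      then show "\<exists>es. (\<forall>e\<in>set es. Q e) \<and> (\<lambda>(W,a,b). cmp C a b) x = msum C X Y (map F es)"
        using eq xx by auto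
    qed
    obtain es0 where es0: "\<forall>e\<in>set es0. Q e" "f = msum C X Y (map F es0)"
      using sum_collect[OF X Y each Fh] feq by auto
    show ?thesis
    proof (cases "es0 = []")
      case True
      have fz: "f = mzero C X Y" using es0(2) True by simp
      have "msum C X Y (map (\<lambda>(E, g, h). cmp C g h) [(X, mzero C X Y, mzero C X X)]) = mzero C X Y"
        using cmp_zero_l[OF X X Y zero_hom[OF X X]] zero_add[OF X Y zero_hom[OF X Y]] by simp
      moreover have "mzero C X X \<in> R X X" using R X unfolding is_ideal_def by blast
      moreover have "sum_of_chains C (right_irr C I) n X Y (mzero C X Y)"
        unfolding sum_of_chains_def by (intro exI[of _ "[]"]) simp
      ultimately show ?thesis using fz iX by (intro exI[of _ "[(X, mzero C X Y, mzero C X X)]"]) auto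
    next
      case False
      have "\<forall>(E, g, h)\<in>set es0. indec C E \<and> h \<in> R X E \<and> sum_of_chains C (right_irr C I) n E Y g"
      proof
        fix e assume "e \<in> set es0"
        moreover obtain E g h where ee: "e = (E,g,h)" by (cases e) auto
        ultimately have iE: "indec C E" and hR: "h \<in> R X E" and ch: "irr_chain C (right_irr C I) E Y (Suc m) g"
          using es0(1) unfolding Q_def by auto
        have gh: "g \<in> hom C E Y" using irr_chain_hom[OF ch rirr_hom[OF I]] .
        have "g = msum C E Y [g]" using msum_single[OF indec_ob[OF iE] Y gh] by simp
        then have "sum_of_chains C (right_irr C I) n E Y g"
          unfolding sum_of_chains_def using ch nm by (intro exI[of _ "[g]"]) auto
        then show "case e of (E, g, h) \<Rightarrow> indec C E \<and> h \<in> R X E \<and> sum_of_chains C (right_irr C I) n E Y g"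
          using ee iE hR by simp
      qed
      then show ?thesis using False es0(2) unfolding F_def by blast
    qed
  qed
  have part2: "\<exists>es :: ('o \<times> 'm \<times> 'm) list. es \<noteq> [] \<and>
              (\<forall>(E, g, h)\<in>set es. indec C E \<and> g \<in> R E Y \<and> sum_of_chains C (left_irr C I) n X E h) \<and>
              f = msum C X Y (map (\<lambda>(E, g, h). cmp C g h) es)"
    if n1: "n \<ge> 1" and f: "f \<in> ideal_prod C R (ideal_pow C I n) X Y" for n f
  proof -
    obtain m where nm: "n = Suc m" using n1 by (cases n) auto
    obtain ts where t: "\<forall>(W,a,b)\<in>set ts. W\<in>ob C \<and> a \<in> R W Y \<and> b \<in> ideal_pow C I (Suc m) X W"
      and feq: "f = msum C X Y (map (\<lambda>(W,a,b). cmp C a b) ts)"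
      using f nm unfolding mem_ideal_prod by blast
    define Q where "Q = (\<lambda>(E,g,h). indec C E \<and> g \<in> R E Y \<and> irr_chain C (left_irr C I) X E (Suc m) h)"
    define F where "F = (\<lambda>(E::'o,g::'m,h::'m). cmp C g h)"
    have Fh: "\<forall>e. Q e \<longrightarrow> F e \<in> hom C X Y"
    proof (intro allI impI)
      fix e assume q: "Q e"
      obtain E g h where ee: "e = (E,g,h)" by (cases e) auto
      have iE: "indec C E" and gR: "g \<in> R E Y" and ch: "irr_chain C (left_irr C I) X E (Suc m) h"
        using q ee unfolding Q_def by auto
      have E: "E \<in> ob C" using indec_ob[OF iE] .
      have "h \<in> hom C X E" using irr_chain_hom[OF ch lirr_hom[OF I]] .
      then show "F e \<in> hom C X Y" using cmp_hom[OF X E Y _ ideal_hom[OF R E Y gR]] ee unfolding F_def by simp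
    qed
    have each: "\<forall>x\<in>set ts. \<exists>es. (\<forall>e\<in>set es. Q e) \<and> (\<lambda>(W,a,b). cmp C a b) x = msum C X Y (map F es)"
    proof
      fix x assume x: "x \<in> set ts"
      obtain W a b where xx: "x = (W,a,b)" by (cases x) auto
      have W: "W\<in>ob C" and a: "a \<in> R W Y" and b: "b \<in> ideal_pow C I (Suc m) X W" using t x xx by auto
      have ah: "a \<in> hom C W Y" using ideal_hom[OF R W Y a] .
      obtain es' where e': "\<forall>(E,g,h)\<in>set es'. irr_chain C (left_irr C I) X E (Suc m) h \<and> g \<in> hom C E W"
        and beq: "b = msum C X W (map (\<lambda>(E,g,h). cmp C g h) es')"
        using chainL[OF I ks al iX W b] by blast
      have eprops: "indec C E \<and> E \<in> ob C \<and> h \<in> hom C X E \<and> g \<in> hom C E W \<and> irr_chain C (left_irr C I) X E (Suc m) h"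
        if "(E,g,h) \<in> set es'" for E g h
      proof -
        have ch: "irr_chain C (left_irr C I) X E (Suc m) h" and g: "g \<in> hom C E W" using e' that by auto
        have "h \<in> hom C X E" using irr_chain_hom[OF ch lirr_hom[OF I]] .
        moreover have "indec C E" using irr_chain_props[OF ch] by blast
        ultimately show ?thesis using indec_ob ch g by blast
      qed
      have e'h: "\<forall>f\<in>set (map (\<lambda>(E,g,h). cmp C g h) es'). f \<in> hom C X W"
      proof
        fix f assume "f \<in> set (map (\<lambda>(E,g,h). cmp C g h) es')"
        then obtain E g h where w: "(E,g,h) \<in> set es'" "f = cmp C g h" by auto
        then show "f \<in> hom C X W" using eprops[OF w(1)] cmp_hom[OF X _ W] by blast
      qed
      define es where "es = map (\<lambda>(E,g,h). (E, cmp C a g, h)) es'"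
      have "cmp C a b = msum C X Y (map (cmp C a) (map (\<lambda>(E,g,h). cmp C g h) es'))"
        using cmp_msum[OF X W Y ah e'h] beq by simp
      also have "map (cmp C a) (map (\<lambda>(E,g,h). cmp C g h) es') = map F es"
      proof -
        have "cmp C a (cmp C g h) = cmp C (cmp C a g) h" if "(E,g,h) \<in> set es'" for E g h
          using eprops[OF that] assoc[OF X _ W Y _ _ ah] by metis
        then show ?thesis unfolding es_def F_def by auto
      qed
      finally have eq: "cmp C a b = msum C X Y (map F es)" .
      have "\<forall>e\<in>set es. Q e"
      proof
        fix e assume "e \<in> set es"
        then obtain E g h where w: "(E,g,h) \<in> set es'" "e = (E, cmp C a g, h)" unfolding es_def by auto
        have "cmp C a g \<in> R E Y" using eprops[OF w(1)] ideal_r[OF R _ W Y a] by blast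
        then show "Q e" using w eprops[OF w(1)] unfolding Q_def by simp
      qed
      then show "\<exists>es. (\<forall>e\<in>set es. Q e) \<and> (\<lambda>(W,a,b). cmp C a b) x = msum C X Y (map F es)"
        using eq xx by auto
    qed
    obtain es0 where es0: "\<forall>e\<in>set es0. Q e" "f = msum C X Y (map F es0)"
      using sum_collect[OF X Y each Fh] feq by auto
    show ?thesis
    proof (cases "es0 = []")
      case True
      have fz: "f = mzero C X Y" using es0(2) True by simp
      have "msum C X Y (map (\<lambda>(E, g, h). cmp C g h) [(Y, mzero C Y Y, mzero C X Y)]) = mzero C X Y"
        using cmp_zero_l[OF X Y Y zero_hom[OF X Y]] zero_add[OF X Y zero_hom[OF X Y]] by simp
      moreover have "mzero C Y Y \<in> R Y Y" using R Y unfolding is_ideal_def by blast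
      moreover have "sum_of_chains C (left_irr C I) n X Y (mzero C X Y)"
        unfolding sum_of_chains_def by (intro exI[of _ "[]"]) simp
      ultimately show ?thesis using fz iY by (intro exI[of _ "[(Y, mzero C Y Y, mzero C X Y)]"]) auto
    next
      case False
      have "\<forall>(E, g, h)\<in>set es0. indec C E \<and> g \<in> R E Y \<and> sum_of_chains C (left_irr C I) n X E h"
      proof
        fix e assume "e \<in> set es0"
        moreover obtain E g h where ee: "e = (E,g,h)" by (cases e) auto
        ultimately have iE: "indec C E" and gR: "g \<in> R E Y" and ch: "irr_chain C (left_irr C I) X E (Suc m) h"
          using es0(1) unfolding Q_def by auto
        have hh: "h \<in> hom C X E" using irr_chain_hom[OF ch lirr_hom[OF I]] .
        have "h = msum C X E [h]" using msum_single[OF X indec_ob[OF iE] hh] by simp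
        then have "sum_of_chains C (left_irr C I) n X E h"
          unfolding sum_of_chains_def using ch nm by (intro exI[of _ "[h]"]) auto
        then show "case e of (E, g, h) \<Rightarrow> indec C E \<and> g \<in> R E Y \<and> sum_of_chains C (left_irr C I) n X E h"
          using ee iE gR by simp
      qed
      then show ?thesis using False es0(2) unfolding F_def by blast
    qed
  qed
  show ?thesis using part1 part2 by blast
qed

end
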